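(* Let $V$ be an infinite-dimensional left vector space over a field $K$. Then the Grassmann graph on $\mathcal G$ is not connected. More precisely, for $X\in\mathcal G$, the connected component of $X$ consists of those $Y\in\mathcal G$ with $\dim((X+Y)/X)=\dim((X+Y)/Y)=d$ for some integer $d\ge0$; in particular no complement of $X$ in $V$ and no $Y\in\mathcal G$ with $Y<X$ or $Y>X$ lies in this component (and such elements of $\mathcal G$ exist, e.g. every hyperplane of $X$ belongs to $\mathcal G$). Moreover, every connected component of the Grassmann graph has infinite diameter.
   Context: Fields are not necessarily commutative (division rings). $\mathcal G$ denotes the set of all subspaces $X\le V$ such that $X$ is isomorphic to $V/X$. Two elements $X,Y\in\mathcal G$ are adjacent if $\dim((X+Y)/X)=\dim((X+Y)/Y)=1$. The Grassmann graph on $\mathcal G$ has vertex set $\mathcal G$ and edges the pairs of adjacent elements. $Y<X$ denotes strict inclusion of subspaces. *)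

theory Defs
  imports Main
begin

text \<open>Left vector spaces over a (not necessarily commutative) division ring.
  The space V is the whole type 'v; scalars form a division_ring 'k; smul is
  left scalar multiplication.\<close>

definition left_vector_space :: "('k::division_ring \<Rightarrow> 'v::ab_group_add \<Rightarrow> 'v) \<Rightarrow> bool" where
  "left_vector_space smul \<longleftrightarrow>
     (\<forall>a x y. smul a (x + y) = smul a x + smul a y) \<and>
     (\<forall>a b x. smul (a + b) x = smul a x + smul b x) \<and>
     (\<forall>a b x. smul (a * b) x = smul a (smul b x)) \<and>
     (\<forall>x. smul 1 x = x)"

definition subspace :: "('k::division_ring \<Rightarrow> 'v::ab_group_add \<Rightarrow> 'v) \<Rightarrow> 'v set \<Rightarrow> bool" where
  "subspace smul X \<longleftrightarrow> 0 \<in> X \<and> (\<forall>x\<in>X. \<forall>y\<in>X. x + y \<in> X) \<and> (\<forall>a. \<forall>x\<in>X. smul a x \<in> X)"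

definition lspan :: "('k::division_ring \<Rightarrow> 'v::ab_group_add \<Rightarrow> 'v) \<Rightarrow> 'v set \<Rightarrow> 'v set" where
  "lspan smul S = \<Inter>{W. subspace smul W \<and> S \<subseteq> W}"

definition infinite_dimensional :: "('k::division_ring \<Rightarrow> 'v::ab_group_add \<Rightarrow> 'v) \<Rightarrow> bool" where
  "infinite_dimensional smul \<longleftrightarrow> \<not> (\<exists>S. finite S \<and> lspan smul S = UNIV)"

definition ssum :: "'v::ab_group_add set \<Rightarrow> 'v set \<Rightarrow> 'v set" where
  "ssum X Y = {x + y | x y. x \<in> X \<and> y \<in> Y}"

definition coset :: "'v::ab_group_add \<Rightarrow> 'v set \<Rightarrow> 'v set" where
  "coset v X = {v + x | x. x \<in> X}"

definition quotient_space :: "'v::ab_group_add set \<Rightarrow> 'v set set" where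
  "quotient_space X = {coset v X | v. True}"

definition qadd :: "'v::ab_group_add set \<Rightarrow> 'v set \<Rightarrow> 'v set" where
  "qadd A B = {a + b | a b. a \<in> A \<and> b \<in> B}"

definition qsmul :: "('k::division_ring \<Rightarrow> 'v::ab_group_add \<Rightarrow> 'v) \<Rightarrow> 'v set \<Rightarrow> 'k \<Rightarrow> 'v set \<Rightarrow> 'v set" where
  "qsmul smul X c A = {smul c a + x | a x. a \<in> A \<and> x \<in> X}"

definition iso_to_quotient :: "('k::division_ring \<Rightarrow> 'v::ab_group_add \<Rightarrow> 'v) \<Rightarrow> 'v set \<Rightarrow> bool" where
  "iso_to_quotient smul X \<longleftrightarrow>
     (\<exists>g. bij_betw g X (quotient_space X) \<and>
          (\<forall>x\<in>X. \<forall>y\<in>X. g (x + y) = qadd (g x) (g y)) \<and>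
          (\<forall>c. \<forall>x\<in>X. g (smul c x) = qsmul smul X c (g x)))"

definition GG :: "('k::division_ring \<Rightarrow> 'v::ab_group_add \<Rightarrow> 'v) \<Rightarrow> 'v set set" where
  "GG smul = {X. subspace smul X \<and> iso_to_quotient smul X}"

text \<open>qdim smul W X d: dim(W/X) = d (finite d), i.e. there are d vectors whose
  classes modulo X form a basis of W/X (they span W together with X and are
  linearly independent modulo X).\<close>
definition qdim :: "('k::division_ring \<Rightarrow> 'v::ab_group_add \<Rightarrow> 'v) \<Rightarrow> 'v set \<Rightarrow> 'v set \<Rightarrow> nat \<Rightarrow> bool" where
  "qdim smul W X d \<longleftrightarrow>
     (\<exists>v :: nat \<Rightarrow> 'v. lspan smul (X \<union> v ` {..<d}) = W \<and>
        (\<forall>c :: nat \<Rightarrow> 'k. (\<Sum>i<d. smul (c i) (v i)) \<in> X \<longrightarrow> (\<forall>i<d. c i = 0)))"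

definition adjacent :: "('k::division_ring \<Rightarrow> 'v::ab_group_add \<Rightarrow> 'v) \<Rightarrow> 'v set \<Rightarrow> 'v set \<Rightarrow> bool" where
  "adjacent smul X Y \<longleftrightarrow> qdim smul (ssum X Y) X 1 \<and> qdim smul (ssum X Y) Y 1"

definition grassmann_edge :: "('k::division_ring \<Rightarrow> 'v::ab_group_add \<Rightarrow> 'v) \<Rightarrow> 'v set \<Rightarrow> 'v set \<Rightarrow> bool" where
  "grassmann_edge smul X Y \<longleftrightarrow> X \<in> GG smul \<and> Y \<in> GG smul \<and> adjacent smul X Y"

definition component :: "('k::division_ring \<Rightarrow> 'v::ab_group_add \<Rightarrow> 'v) \<Rightarrow> 'v set \<Rightarrow> 'v set set" where
  "component smul X = {Y. (grassmann_edge smul)\<^sup>*\<^sup>* X Y}"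

definition dist_le :: "('k::division_ring \<Rightarrow> 'v::ab_group_add \<Rightarrow> 'v) \<Rightarrow> 'v set \<Rightarrow> 'v set \<Rightarrow> nat \<Rightarrow> bool" where
  "dist_le smul X Y n \<longleftrightarrow> (\<exists>k\<le>n. (grassmann_edge smul ^^ k) X Y)"

end

theory Submission
  imports Defs "HOL-Library.Equipollence"
begin

locale lvs =
  fixes smul :: "'k::division_ring \<Rightarrow> 'v::ab_group_add \<Rightarrow> 'v"
  assumes lvs: "left_vector_space smul"
begin

lemma add_r: "smul a (x + y) = smul a x + smul a y"
  using lvs unfolding left_vector_space_def by blast
lemma add_l: "smul (a + b) x = smul a x + smul b x"
  using lvs unfolding left_vector_space_def by blast
lemma mult_l: "smul (a * b) x = smul a (smul b x)"
  using lvs unfolding left_vector_space_def by blast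
lemma one_l[simp]: "smul 1 x = x"
  using lvs unfolding left_vector_space_def by blast

lemma zero_l[simp]: "smul 0 x = 0"
proof -
  have "smul 0 x + smul 0 x = smul 0 x + 0" using add_l[of 0 0 x] by simp
  then show ?thesis by (rule add_left_imp_eq)
qed
lemma zero_r[simp]: "smul a 0 = 0"
proof -
  have "smul a 0 + smul a 0 = smul a 0 + 0" using add_r[of a 0 0] by simp
  then show ?thesis by (rule add_left_imp_eq)
qed
lemma minus_r: "smul a (- x) = - smul a x"
proof -
  have "smul a x + smul a (- x) = 0" using add_r[of a x "-x"] by simp
  then show ?thesis by (simp add: eq_neg_iff_add_eq_0 add.commute)
qed
lemma minus_l: "smul (- a) x = - smul a x"
proof -
  have "smul a x + smul (- a) x = 0" using add_l[of a "-a" x] by simp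
  then show ?thesis by (simp add: eq_neg_iff_add_eq_0 add.commute)
qed
lemma diff_r: "smul a (x - y) = smul a x - smul a y"
  by (simp only: diff_conv_add_uminus add_r minus_r)
lemma diff_l: "smul (a - b) x = smul a x - smul b x"
  by (simp only: diff_conv_add_uminus add_l minus_l)
lemma sum_r: "smul a (\<Sum>i\<in>I. f i) = (\<Sum>i\<in>I. smul a (f i))"
  by (induction I rule: infinite_finite_induct) (auto simp: add_r)
lemma sum_l: "smul (\<Sum>i\<in>I. f i) x = (\<Sum>i\<in>I. smul (f i) x)"
  by (induction I rule: infinite_finite_induct) (auto simp: add_l)
lemma inv_l: "a \<noteq> 0 \<Longrightarrow> smul (inverse a) (smul a x) = x"
  by (simp add: mult_l[symmetric])

lemma sub_0: "subspace smul X \<Longrightarrow> 0 \<in> X"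
  unfolding subspace_def by blast
lemma sub_add: "subspace smul X \<Longrightarrow> x \<in> X \<Longrightarrow> y \<in> X \<Longrightarrow> x + y \<in> X"
  unfolding subspace_def by blast
lemma sub_smul: "subspace smul X \<Longrightarrow> x \<in> X \<Longrightarrow> smul a x \<in> X"
  unfolding subspace_def by blast
lemma sub_neg: "subspace smul X \<Longrightarrow> x \<in> X \<Longrightarrow> - x \<in> X"
proof -
  assume a: "subspace smul X" "x \<in> X"
  have "smul (-1) x = - x" by (simp only: minus_l one_l)
  with sub_smul[OF a, of "-1"] show ?thesis by simp
qed
lemma sub_diff: "subspace smul X \<Longrightarrow> x \<in> X \<Longrightarrow> y \<in> X \<Longrightarrow> x - y \<in> X"
  unfolding diff_conv_add_uminus by (intro sub_add sub_neg)
lemma sub_sum: "subspace smul X \<Longrightarrow> (\<And>i. i \<in> I \<Longrightarrow> f i \<in> X) \<Longrightarrow> (\<Sum>i\<in>I. f i) \<in> X"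
proof (induction I rule: infinite_finite_induct)
  case (infinite A)
  then show ?case by (simp add: sub_0)
next
  case empty
  then show ?case by (simp add: sub_0)
next
  case (insert x F)
  then show ?case by (simp add: sub_add)
qed
lemma sub_lin: "subspace smul X \<Longrightarrow> (\<And>i. i \<in> I \<Longrightarrow> f i \<in> X) \<Longrightarrow> (\<Sum>i\<in>I. smul (c i) (f i)) \<in> X"
  by (rule sub_sum) (blast intro: sub_smul)+
lemma sub_zero: "subspace smul {0}"
  unfolding subspace_def by auto
lemma sub_UNIV: "subspace smul UNIV"
  unfolding subspace_def by auto
lemma sub_Int: "subspace smul X \<Longrightarrow> subspace smul Y \<Longrightarrow> subspace smul (X \<inter> Y)"
  unfolding subspace_def by auto

abbreviation span where "span \<equiv> lspan smul"

lemma span_sub[simp]: "subspace smul (span S)"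
  unfolding lspan_def subspace_def by auto
lemma span_sup: "S \<subseteq> span S"
  unfolding lspan_def by auto
lemma span_base: "x \<in> S \<Longrightarrow> x \<in> span S"
  using span_sup by blast
lemma span_min: "subspace smul W \<Longrightarrow> S \<subseteq> W \<Longrightarrow> span S \<subseteq> W"
  unfolding lspan_def by auto
lemma span_mono: "S \<subseteq> T \<Longrightarrow> span S \<subseteq> span T"
  by (meson span_min span_sub span_sup subset_trans)
lemma span_of_sub: "subspace smul X \<Longrightarrow> span X = X"
  by (simp add: span_min span_sup subset_antisym)
lemma span_span_Un: "span (span S \<union> T) = span (S \<union> T)"
proof
  show "span (span S \<union> T) \<subseteq> span (S \<union> T)"
  proof (rule span_min)
    have "span S \<subseteq> span (S \<union> T)" by (rule span_mono) auto
    moreover have "T \<subseteq> span (S \<union> T)" using span_sup by blast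
    ultimately show "span S \<union> T \<subseteq> span (S \<union> T)" by blast
  qed simp
  show "span (S \<union> T) \<subseteq> span (span S \<union> T)"
    by (rule span_mono) (use span_sup in blast)
qed
lemma span_span_Un2: "span (T \<union> span S) = span (T \<union> S)"
  using span_span_Un[of S T] by (simp add: Un_commute)
lemma span_span[simp]: "span (span S) = span S"
  by (simp add: span_of_sub)
lemma span_0[simp]: "0 \<in> span S"
  by (simp add: sub_0)
lemma span_zero_Un: "span ({0} \<union> S) = span S"
proof
  show "span ({0} \<union> S) \<subseteq> span S" by (rule span_min) (auto intro: span_base)
  show "span S \<subseteq> span ({0} \<union> S)" by (rule span_mono) auto
qed
lemma span_lin: "(\<And>i. i \<in> I \<Longrightarrow> f i \<in> span S) \<Longrightarrow> (\<Sum>i\<in>I. smul (c i) (f i)) \<in> span S"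
  by (rule sub_lin) auto
lemma span_subI: "subspace smul W \<Longrightarrow> X \<subseteq> W \<Longrightarrow> X \<subseteq> span S \<Longrightarrow> span S \<subseteq> W \<Longrightarrow> span X \<subseteq> W"
  by (simp add: span_min)

end

context lvs
begin

lemma sum_ext0:
  assumes "finite H" "G \<subseteq> H"
  shows "(\<Sum>s\<in>H. smul (if s \<in> G then c s else 0) s) = (\<Sum>s\<in>G. smul (c s) s)"
proof -
  have "(\<Sum>s\<in>H. smul (if s \<in> G then c s else 0) s) = (\<Sum>s\<in>H. if s \<in> G then smul (c s) s else 0)"
    by (rule sum.cong) auto
  also have "\<dots> = (\<Sum>s\<in>H \<inter> G. smul (c s) s)"
    using sum.inter_restrict[OF assms(1), of "\<lambda>s. smul (c s) s" G] by simp
  also have "H \<inter> G = G" using assms(2) by blast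
  finally show ?thesis .
qed

definition LC :: "'v set \<Rightarrow> 'v set \<Rightarrow> 'v set" where
  "LC X S = {x + (\<Sum>s\<in>G. smul (c s) s) | x G c. x \<in> X \<and> finite G \<and> G \<subseteq> S}"

lemma LC_sub:
  assumes X: "subspace smul X"
  shows "subspace smul (LC X S)"
  unfolding subspace_def
proof (intro conjI ballI allI)
  show "0 \<in> LC X S" unfolding LC_def
    by (rule CollectI, rule exI[of _ 0], rule exI[of _ "{}"]) (simp add: sub_0[OF X])
next
  fix u v assume "u \<in> LC X S" "v \<in> LC X S"
  then obtain x1 G1 c1 x2 G2 c2 where u: "u = x1 + (\<Sum>s\<in>G1. smul (c1 s) s)" "x1 \<in> X" "finite G1" "G1 \<subseteq> S"
    and v: "v = x2 + (\<Sum>s\<in>G2. smul (c2 s) s)" "x2 \<in> X" "finite G2" "G2 \<subseteq> S"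
    unfolding LC_def by blast
  define c where "c s = (if s \<in> G1 then c1 s else 0) + (if s \<in> G2 then c2 s else 0)" for s
  have fin: "finite (G1 \<union> G2)" using u v by simp
  have "(\<Sum>s\<in>G1 \<union> G2. smul (c s) s) = (\<Sum>s\<in>G1 \<union> G2. smul (if s \<in> G1 then c1 s else 0) s) + (\<Sum>s\<in>G1 \<union> G2. smul (if s \<in> G2 then c2 s else 0) s)"
    unfolding c_def add_l by (simp add: sum.distrib)
  also have "\<dots> = (\<Sum>s\<in>G1. smul (c1 s) s) + (\<Sum>s\<in>G2. smul (c2 s) s)"
    using sum_ext0[OF fin, of G1 c1] sum_ext0[OF fin, of G2 c2] by simp
  finally have "u + v = (x1 + x2) + (\<Sum>s\<in>G1 \<union> G2. smul (c s) s)"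
    using u v by (simp add: algebra_simps)
  moreover have "x1 + x2 \<in> X" using u v X by (simp add: sub_add)
  ultimately show "u + v \<in> LC X S" unfolding LC_def using fin u v by blast
next
  fix a u assume "u \<in> LC X S"
  then obtain x G c where u: "u = x + (\<Sum>s\<in>G. smul (c s) s)" "x \<in> X" "finite G" "G \<subseteq> S"
    unfolding LC_def by blast
  have "smul a u = smul a x + (\<Sum>s\<in>G. smul (a * c s) s)"
    unfolding u add_r sum_r mult_l ..
  moreover have "smul a x \<in> X" using X u by (simp add: sub_smul)
  ultimately have "\<exists>x' G' c'. smul a u = x' + (\<Sum>s\<in>G'. smul (c' s) s) \<and> x' \<in> X \<and> finite G' \<and> G' \<subseteq> S"
    using u by (intro exI[of _ "smul a x"] exI[of _ G] exI[of _ "\<lambda>s. a * c s"]) simp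
  then show "smul a u \<in> LC X S" unfolding LC_def by blast
qed

lemma span_LC:
  assumes X: "subspace smul X"
  shows "span (X \<union> S) = LC X S"
proof
  show "span (X \<union> S) \<subseteq> LC X S"
  proof (rule span_min[OF LC_sub[OF X]], rule subsetI)
    fix v assume "v \<in> X \<union> S"
    then show "v \<in> LC X S"
    proof
      assume "v \<in> X"
      then have "\<exists>x G c. v = x + (\<Sum>s\<in>G. smul (c s) s) \<and> x \<in> X \<and> finite G \<and> G \<subseteq> S"
        by (intro exI[of _ v] exI[of _ "{}"]) simp
      then show ?thesis unfolding LC_def by blast
    next
      assume "v \<in> S"
      then have "\<exists>x G c. v = x + (\<Sum>s\<in>G. smul (c s) s) \<and> x \<in> X \<and> finite G \<and> G \<subseteq> S"
        using sub_0[OF X] by (intro exI[of _ 0] exI[of _ "{v}"] exI[of _ "\<lambda>_. 1"]) simp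
      then show ?thesis unfolding LC_def by blast
    qed
  qed
  show "LC X S \<subseteq> span (X \<union> S)"
  proof
    fix v assume "v \<in> LC X S"
    then obtain x G c where u: "v = x + (\<Sum>s\<in>G. smul (c s) s)" "x \<in> X" "finite G" "G \<subseteq> S"
      unfolding LC_def by blast
    have "x \<in> span (X \<union> S)" using u span_base by blast
    moreover have "(\<Sum>s\<in>G. smul (c s) s) \<in> span (X \<union> S)"
      by (rule span_lin) (use u span_base in blast)
    ultimately show "v \<in> span (X \<union> S)" using u sub_add[OF span_sub] by simp
  qed
qed

lemma in_span_Un:
  assumes "subspace smul X"
  shows "v \<in> span (X \<union> S) \<longleftrightarrow> (\<exists>x G c. x \<in> X \<and> finite G \<and> G \<subseteq> S \<and> v = x + (\<Sum>s\<in>G. smul (c s) s))"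
  unfolding span_LC[OF assms] LC_def by blast

lemma in_span:
  "v \<in> span S \<longleftrightarrow> (\<exists>G c. finite G \<and> G \<subseteq> S \<and> v = (\<Sum>s\<in>G. smul (c s) s))"
  using in_span_Un[OF sub_zero, of v S] unfolding span_zero_Un by simp

lemma span_insert:
  "v \<in> span (insert g S) \<longleftrightarrow> (\<exists>a s. s \<in> span S \<and> v = smul a g + s)"
proof -
  let ?I = "{smul a g + s | a s. s \<in> span S}"
  have sI: "subspace smul ?I"
    unfolding subspace_def
  proof (intro conjI ballI allI)
    show "0 \<in> ?I" by (rule CollectI, rule exI[of _ 0], rule exI[of _ 0]) simp
  next
    fix u v assume "u \<in> ?I" "v \<in> ?I"
    then obtain a s b t where "u = smul a g + s" "s \<in> span S" "v = smul b g + t" "t \<in> span S" by blast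
    then have "u + v = smul (a + b) g + (s + t)" "s + t \<in> span S"
      by (simp_all add: add_l algebra_simps sub_add)
    then show "u + v \<in> ?I" by blast
  next
    fix c u assume "u \<in> ?I"
    then obtain a s where "u = smul a g + s" "s \<in> span S" by blast
    then have "smul c u = smul (c * a) g + smul c s" "smul c s \<in> span S"
      by (simp_all add: add_r mult_l sub_smul)
    then show "smul c u \<in> ?I" by blast
  qed
  have "span (insert g S) \<subseteq> ?I"
  proof (rule span_min[OF sI], rule subsetI)
    fix v assume "v \<in> insert g S"
    then show "v \<in> ?I"
    proof
      assume "v = g" then have "v = smul 1 g + 0" by simp
      then show ?thesis using span_0[of S] by blast
    next
      assume "v \<in> S" then have "v = smul 0 g + v" "v \<in> span S" by (simp_all add: span_base)
      then show ?thesis by blast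
    qed
  qed
  moreover have "?I \<subseteq> span (insert g S)"
  proof
    fix v assume "v \<in> ?I"
    then obtain a s where v: "v = smul a g + s" "s \<in> span S" by blast
    have "s \<in> span (insert g S)" using v(2) span_mono[of S "insert g S"] by blast
    moreover have "smul a g \<in> span (insert g S)" by (simp add: sub_smul span_base)
    ultimately show "v \<in> span (insert g S)" using v(1) by (simp add: sub_add)
  qed
  ultimately show ?thesis by blast
qed

lemma exchange:
  assumes "f \<in> span (insert g S)" "f \<notin> span S"
  shows "g \<in> span (insert f S)"
proof -
  obtain a s where as: "s \<in> span S" "f = smul a g + s" using assms(1) span_insert by blast
  have a: "a \<noteq> 0" using as assms(2) by auto
  have "smul a g = f - s" using as by simp
  then have "g = smul (inverse a) (f - s)" using inv_l[OF a, of g] by simp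
  also have "\<dots> = smul (inverse a) f + smul (- inverse a) s"
    by (simp only: diff_conv_add_uminus add_r minus_r minus_l)
  finally have "g = smul (inverse a) f + smul (- inverse a) s" .
  moreover have "smul (- inverse a) s \<in> span S" using as(1) by (simp add: sub_smul)
  ultimately show ?thesis unfolding span_insert by blast
qed

end

context lvs
begin

definition indep :: "'v set \<Rightarrow> 'v set \<Rightarrow> bool" where
  "indep X S \<longleftrightarrow> (\<forall>G c. finite G \<longrightarrow> G \<subseteq> S \<longrightarrow> (\<Sum>s\<in>G. smul (c s) s) \<in> X \<longrightarrow> (\<forall>s\<in>G. c s = 0))"

lemma indepD: "indep X S \<Longrightarrow> finite G \<Longrightarrow> G \<subseteq> S \<Longrightarrow> (\<Sum>s\<in>G. smul (c s) s) \<in> X \<Longrightarrow> s \<in> G \<Longrightarrow> c s = 0"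
  unfolding indep_def by blast

lemma indep_mono: "indep X S \<Longrightarrow> T \<subseteq> S \<Longrightarrow> indep X T"
  unfolding indep_def by blast

lemma indep_empty: "indep X {}"
  unfolding indep_def by blast

lemma indep_notin: "indep X S \<Longrightarrow> s \<in> S \<Longrightarrow> s \<notin> X"
proof
  assume a: "indep X S" "s \<in> S" "s \<in> X"
  have "(\<Sum>t\<in>{s}. smul ((\<lambda>_. 1::'k) t) t) \<in> X" using a by simp
  from indepD[OF a(1) _ _ this, of s] a(2) show False by simp
qed

lemma indep_notin_span:
  assumes X: "subspace smul X" and I: "indep X S" and s: "s \<in> S"
  shows "s \<notin> span (X \<union> (S - {s}))"
proof
  assume "s \<in> span (X \<union> (S - {s}))"
  then obtain x G c where xG: "x \<in> X" "finite G" "G \<subseteq> S - {s}" "s = x + (\<Sum>t\<in>G. smul (c t) t)"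
    unfolding in_span_Un[OF X] by blast
  define c' where "c' = c(s := -1)"
  have sG: "s \<notin> G" using xG by blast
  have "(\<Sum>t\<in>insert s G. smul (c' t) t) = smul (-1) s + (\<Sum>t\<in>G. smul (c' t) t)"
    using sG xG(2) by (simp add: c'_def)
  also have "(\<Sum>t\<in>G. smul (c' t) t) = (\<Sum>t\<in>G. smul (c t) t)"
    by (rule sum.cong) (use sG in \<open>auto simp: c'_def\<close>)
  also have "smul (-1) s = - s" by (simp only: minus_l one_l)
  also have "- s + (\<Sum>t\<in>G. smul (c t) t) = - x" using xG(4) by (simp add: algebra_simps)
  finally have "(\<Sum>t\<in>insert s G. smul (c' t) t) \<in> X" using sub_neg[OF X xG(1)] by simp
  from indepD[OF I _ _ this, of s] xG s have "c' s = 0" by auto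
  then show False by (simp add: c'_def)
qed

lemma indep_insert:
  assumes X: "subspace smul X" and I: "indep X M" and t: "t \<notin> span (X \<union> M)"
  shows "indep X (insert t M)"
  unfolding indep_def
proof (intro allI impI ballI)
  fix G c s assume G: "finite G" "G \<subseteq> insert t M" "(\<Sum>s\<in>G. smul (c s) s) \<in> X" "s \<in> G"
  show "c s = 0"
  proof (cases "t \<in> G")
    case False
    then show ?thesis using indepD[OF I G(1) _ G(3) G(4)] G(2) by blast
  next
    case True
    have tM: "t \<notin> M" using t span_sup by blast
    have G': "G - {t} \<subseteq> M" using G(2) by blast
    have eq: "(\<Sum>s\<in>G. smul (c s) s) = smul (c t) t + (\<Sum>s\<in>G - {t}. smul (c s) s)"
      using True G(1) by (simp add: sum.remove)
    have inS: "(\<Sum>s\<in>G - {t}. smul (c s) s) \<in> span (X \<union> M)"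
      by (rule span_lin) (use G' span_base in blast)
    have ct: "c t = 0"
    proof (rule ccontr)
      assume ct: "c t \<noteq> 0"
      have "smul (c t) t = (\<Sum>s\<in>G. smul (c s) s) - (\<Sum>s\<in>G - {t}. smul (c s) s)"
        using eq by simp
      also have "\<dots> \<in> span (X \<union> M)"
        using G(3) inS span_base[of _ "X \<union> M"] by (intro sub_diff) auto
      finally have "smul (inverse (c t)) (smul (c t) t) \<in> span (X \<union> M)" by (simp add: sub_smul)
      then show False using inv_l[OF ct] t by simp
    qed
    show ?thesis
    proof (cases "s = t")
      case True with ct show ?thesis by simp
    next
      case False
      have "(\<Sum>s\<in>G - {t}. smul (c s) s) \<in> X" using G(3) eq ct by simp
      from indepD[OF I _ G' this, of s] G False show ?thesis by blast
    qed
  qed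
qed

lemma indep_single: "subspace smul X \<Longrightarrow> y \<notin> X \<Longrightarrow> indep X {y}"
  using indep_insert[of X "{}" y] indep_empty span_of_sub by simp

lemma indep_union:
  assumes X: "subspace smul X" and IA: "indep X A" and IB: "indep (span (X \<union> A)) B"
  shows "indep X (A \<union> B)"
  unfolding indep_def
proof (intro allI impI ballI)
  fix G c s assume G: "finite G" "G \<subseteq> A \<union> B" "(\<Sum>s\<in>G. smul (c s) s) \<in> X" "s \<in> G"
  have split: "(\<Sum>s\<in>G. smul (c s) s) = (\<Sum>s\<in>G \<inter> B. smul (c s) s) + (\<Sum>s\<in>G - B. smul (c s) s)"
    using G(1) by (rule sum.Int_Diff)
  have GA: "G - B \<subseteq> A" using G(2) by blast
  have inA: "(\<Sum>s\<in>G - B. smul (c s) s) \<in> span (X \<union> A)"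
    by (rule span_lin) (use GA span_base in blast)
  have "(\<Sum>s\<in>G \<inter> B. smul (c s) s) = (\<Sum>s\<in>G. smul (c s) s) - (\<Sum>s\<in>G - B. smul (c s) s)"
    using split by simp
  also have "\<dots> \<in> span (X \<union> A)"
    using G(3) inA span_base[of _ "X \<union> A"] by (intro sub_diff) auto
  finally have inB: "(\<Sum>s\<in>G \<inter> B. smul (c s) s) \<in> span (X \<union> A)" .
  have zB: "\<forall>s\<in>G \<inter> B. c s = 0"
    using indepD[OF IB _ _ inB] G(1) by blast
  show "c s = 0"
  proof (cases "s \<in> B")
    case True then show ?thesis using zB G(4) by blast
  next
    case False
    have "(\<Sum>s\<in>G \<inter> B. smul (c s) s) = 0" using zB by simp
    then have "(\<Sum>s\<in>G - B. smul (c s) s) \<in> X" using split G(3) by simp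
    from indepD[OF IA _ GA this, of s] G False show ?thesis by blast
  qed
qed

lemma indep_split:
  assumes X: "subspace smul X" and I: "indep X (A \<union> B)" and d: "A \<inter> B = {}"
  shows "indep (span (X \<union> A)) B"
  unfolding indep_def
proof (intro allI impI ballI)
  fix G c s assume G: "finite G" "G \<subseteq> B" "(\<Sum>s\<in>G. smul (c s) s) \<in> span (X \<union> A)" "s \<in> G"
  obtain x H d where H: "x \<in> X" "finite H" "H \<subseteq> A" "(\<Sum>s\<in>G. smul (c s) s) = x + (\<Sum>t\<in>H. smul (d t) t)"
    using G(3) unfolding in_span_Un[OF X] by blast
  define e where "e t = (if t \<in> G then c t else - d t)" for t
  have GH: "G \<inter> H = {}" using G(2) H(3) d by blast
  have "(\<Sum>t\<in>G \<union> H. smul (e t) t) = (\<Sum>t\<in>G. smul (e t) t) + (\<Sum>t\<in>H. smul (e t) t)"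
    using G(1) H(2) GH by (rule sum.union_disjoint)
  also have "(\<Sum>t\<in>G. smul (e t) t) = (\<Sum>t\<in>G. smul (c t) t)"
    by (rule sum.cong) (auto simp: e_def)
  also have "(\<Sum>t\<in>H. smul (e t) t) = (\<Sum>t\<in>H. - smul (d t) t)"
    by (rule sum.cong) (use GH in \<open>auto simp: e_def minus_l\<close>)
  also have "\<dots> = - (\<Sum>t\<in>H. smul (d t) t)" by (simp add: sum_negf)
  finally have "(\<Sum>t\<in>G \<union> H. smul (e t) t) = x" using H(4) by simp
  then have "(\<Sum>t\<in>G \<union> H. smul (e t) t) \<in> X" using H(1) by simp
  from indepD[OF I _ _ this, of s] G H have "e s = 0" by blast
  then show "c s = 0" using G(4) by (simp add: e_def)
qed

lemma steinitz:
  assumes "finite G"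
  shows "subspace smul X \<Longrightarrow> indep X F \<Longrightarrow> F \<subseteq> span (X \<union> G) \<Longrightarrow> finite F \<and> card F \<le> card G"
  using assms
proof (induction G arbitrary: X F rule: finite_induct)
  case empty
  have "F \<subseteq> X" using empty span_of_sub by simp
  then have "F = {}" using indep_notin[OF empty(2)] by blast
  then show ?case by simp
next
  case (insert g G)
  show ?case
  proof (cases "F \<subseteq> span (X \<union> G)")
    case True
    from insert.IH[OF insert.prems(1,2) True] insert.hyps show ?thesis by simp
  next
    case False
    then obtain f where f: "f \<in> F" "f \<notin> span (X \<union> G)" by blast
    define X' where "X' = span (X \<union> {f})"
    have sX': "subspace smul X'" by (simp add: X'_def)
    have FF: "{f} \<union> (F - {f}) = F" using f by blast
    have I': "indep X' (F - {f})" unfolding X'_def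
      by (rule indep_split[OF insert.prems(1)]) (use insert.prems(2) FF in auto)
    have XX': "X \<subseteq> X'" unfolding X'_def using span_sup by blast
    have fX': "f \<in> X'" unfolding X'_def using span_sup by blast
    have eqs: "X \<union> insert g G = insert g (X \<union> G)" by blast
    have "f \<in> span (insert g (X \<union> G))" using insert.prems(3) f(1) unfolding eqs by blast
    from exchange[OF this f(2)] have "g \<in> span (insert f (X \<union> G))" .
    also have "span (insert f (X \<union> G)) \<subseteq> span (X' \<union> G)"
      by (rule span_mono) (use XX' fX' in blast)
    finally have g: "g \<in> span (X' \<union> G)" .
    have "X' \<union> G \<subseteq> span (X' \<union> G)" by (rule span_sup)
    then have "X \<union> insert g G \<subseteq> span (X' \<union> G)" using g XX' by blast
    then have "span (X \<union> insert g G) \<subseteq> span (X' \<union> G)"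
      by (rule span_min[OF span_sub])
    then have "F - {f} \<subseteq> span (X' \<union> G)" using insert.prems(3) by blast
    from insert.IH[OF sX' I' this] have "finite (F - {f})" "card (F - {f}) \<le> card G" by auto
    then show ?thesis using f(1) insert.hyps by (simp add: card_Diff_singleton_if)
  qed
qed

end

context lvs
begin

lemma zorn_indep:
  assumes X: "subspace smul X"
  shows "\<exists>M. M \<subseteq> T \<and> indep X M \<and> T \<subseteq> span (X \<union> M)"
proof -
  let ?A = "{M. M \<subseteq> T \<and> indep X M}"
  have "\<forall>C\<in>chains ?A. \<Union>C \<in> ?A"
  proof
    fix C assume C: "C \<in> chains ?A"
    have sub: "\<Union>C \<subseteq> T" using C unfolding chains_def by blast
    have "indep X (\<Union>C)"
      unfolding indep_def
    proof (intro allI impI)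
      fix G c assume G: "finite G" "G \<subseteq> \<Union>C" "(\<Sum>s\<in>G. smul (c s) s) \<in> X"
      show "\<forall>s\<in>G. c s = 0"
      proof (cases "C = {}")
        case True then show ?thesis using G by auto
      next
        case False
        have ch: "subset.chain UNIV C" using C unfolding chains_def chain_subset_alt_def by blast
        obtain B where B: "B \<in> C" "G \<subseteq> B" using finite_subset_Union_chain[OF G(1) G(2) False ch] by blast
        have "indep X B" using B(1) C unfolding chains_def by blast
        then show ?thesis using indepD[OF _ G(1) B(2) G(3)] by blast
      qed
    qed
    then show "\<Union>C \<in> ?A" using sub by blast
  qed
  from Zorn_Lemma[OF this] obtain M where M: "M \<in> ?A" and max: "\<forall>Y\<in>?A. M \<subseteq> Y \<longrightarrow> Y = M" by blast
  have "T \<subseteq> span (X \<union> M)"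
  proof
    fix t assume t: "t \<in> T"
    show "t \<in> span (X \<union> M)"
    proof (rule ccontr)
      assume n: "t \<notin> span (X \<union> M)"
      have "insert t M \<in> ?A" using indep_insert[OF X _ n] M t by blast
      then have "insert t M = M" using max by blast
      then have "t \<in> M" by blast
      then show False using n span_sup by blast
    qed
  qed
  then show ?thesis using M by blast
qed

lemma basis_exists:
  assumes W: "subspace smul W"
  shows "\<exists>A. A \<subseteq> W \<and> indep {0} A \<and> span A = W"
proof -
  obtain M where M: "M \<subseteq> W" "indep {0} M" "W \<subseteq> span ({0} \<union> M)"
    using zorn_indep[OF sub_zero] by blast
  have "span M \<subseteq> W" using span_min[OF W M(1)] .
  moreover have "W \<subseteq> span M" using M(3) span_zero_Un by simp
  ultimately show ?thesis using M by blast
qed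

definition qd :: "'v set \<Rightarrow> 'v set \<Rightarrow> 'v set \<Rightarrow> bool" where
  "qd X W F \<longleftrightarrow> finite F \<and> indep X F \<and> span (X \<union> F) = W"

definition fin :: "'v set \<Rightarrow> 'v set \<Rightarrow> bool" where
  "fin X W \<longleftrightarrow> (\<exists>F. qd X W F)"

definition dimq :: "'v set \<Rightarrow> 'v set \<Rightarrow> nat" where
  "dimq X W = card (SOME F. qd X W F)"

lemma qd_card_le:
  assumes X: "subspace smul X" and F: "qd X W F" and G: "qd X W G"
  shows "card F \<le> card G"
proof -
  have "F \<subseteq> span (X \<union> G)" using F G span_sup unfolding qd_def by blast
  then show ?thesis using steinitz[OF _ X] F G unfolding qd_def by blast
qed

lemma qd_card_eq: "subspace smul X \<Longrightarrow> qd X W F \<Longrightarrow> qd X W G \<Longrightarrow> card F = card G"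
  using qd_card_le[of X W F G] qd_card_le[of X W G F] by simp

lemma dimq_eq: "subspace smul X \<Longrightarrow> qd X W F \<Longrightarrow> dimq X W = card F"
proof -
  assume X: "subspace smul X" and F: "qd X W F"
  have "qd X W (SOME F. qd X W F)" using F by (rule someI)
  then show ?thesis unfolding dimq_def using qd_card_eq[OF X _ F] by blast
qed

lemma qd_span_fin:
  assumes X: "subspace smul X" and T: "finite T"
  shows "\<exists>F. F \<subseteq> T \<and> qd X (span (X \<union> T)) F"
proof -
  obtain M where M: "M \<subseteq> T" "indep X M" "T \<subseteq> span (X \<union> M)" using zorn_indep[OF X] by blast
  have "span (X \<union> M) \<subseteq> span (X \<union> T)" using M(1) by (intro span_mono) blast
  moreover have "X \<union> T \<subseteq> span (X \<union> M)" using M(3) span_sup by blast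
  then have "span (X \<union> T) \<subseteq> span (X \<union> M)" by (rule span_min[OF span_sub])
  ultimately have "span (X \<union> M) = span (X \<union> T)" by blast
  moreover have "finite M" using finite_subset[OF M(1) T] .
  ultimately have "qd X (span (X \<union> T)) M" unfolding qd_def using M(2) by blast
  then show ?thesis using M(1) by blast
qed

lemma fin_span: "subspace smul X \<Longrightarrow> finite T \<Longrightarrow> fin X (span (X \<union> T))"
  using qd_span_fin unfolding fin_def by blast

lemma qd_refl: "subspace smul X \<Longrightarrow> qd X X {}"
  unfolding qd_def by (simp add: indep_empty span_of_sub)

lemma fin_refl: "subspace smul X \<Longrightarrow> fin X X"
  using qd_refl fin_def by blast

lemma dimq_refl: "subspace smul X \<Longrightarrow> dimq X X = 0"
  using dimq_eq[OF _ qd_refl] by simp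

lemma qd_sup: "qd X W F \<Longrightarrow> X \<subseteq> W"
  unfolding qd_def using span_sup by blast

lemma fin_sup: "fin X W \<Longrightarrow> X \<subseteq> W"
  unfolding fin_def using qd_sup by blast

lemma qd_W_sub: "qd X W F \<Longrightarrow> subspace smul W"
  unfolding qd_def by auto

lemma dimq_zero:
  assumes X: "subspace smul X" and f: "fin X W" and d: "dimq X W = 0"
  shows "W = X"
proof -
  obtain F where F: "qd X W F" using f fin_def by blast
  then have "card F = 0" using dimq_eq[OF X F] d by simp
  then have "F = {}" using F unfolding qd_def by simp
  then show ?thesis using F span_of_sub[OF X] unfolding qd_def by simp
qed

lemma qd_sub:
  assumes X: "subspace smul X" and U: "subspace smul U" and XU: "X \<subseteq> U" and UW: "U \<subseteq> W"
    and F: "qd X W F"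
  shows "\<exists>F'. qd X U F' \<and> card F' \<le> card F"
proof -
  obtain M where M: "M \<subseteq> U" "indep X M" "U \<subseteq> span (X \<union> M)" using zorn_indep[OF X] by blast
  have "M \<subseteq> span (X \<union> F)" using M(1) UW F unfolding qd_def by blast
  then have fc: "finite M" "card M \<le> card F" using steinitz[OF _ X M(2)] F unfolding qd_def by auto
  have "span (X \<union> M) \<subseteq> U" using span_min[OF U] XU M(1) by blast
  then show ?thesis using fc M unfolding qd_def by blast
qed

lemma qd_top:
  assumes X: "subspace smul X" and U: "subspace smul U" and XU: "X \<subseteq> U" and UW: "U \<subseteq> W"
    and F: "qd X W F"
  shows "\<exists>F'. qd U W F' \<and> card F' \<le> card F"
proof -
  have W: "W = span (X \<union> F)" using F unfolding qd_def by simp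
  have "span (U \<union> F) = W"
  proof
    show "span (U \<union> F) \<subseteq> W" using UW W span_sup[of "X \<union> F"] by (intro span_min) (auto simp: W)
    show "W \<subseteq> span (U \<union> F)" unfolding W using XU by (intro span_mono) blast
  qed
  moreover obtain F' where F': "F' \<subseteq> F" "qd U (span (U \<union> F)) F'"
    using qd_span_fin[OF U, of F] F unfolding qd_def by blast
  moreover have "card F' \<le> card F" using F'(1) F unfolding qd_def by (simp add: card_mono)
  ultimately show ?thesis by auto
qed

lemma qd_add:
  assumes X: "subspace smul X" and F: "qd X U F" and G: "qd U W G"
  shows "qd X W (F \<union> G) \<and> F \<inter> G = {}"
proof -
  have U: "U = span (X \<union> F)" using F unfolding qd_def by simp
  have I: "indep X (F \<union> G)"
    by (rule indep_union[OF X]) (use F G U in \<open>auto simp: qd_def\<close>)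
  have "span (X \<union> (F \<union> G)) = span (span (X \<union> F) \<union> G)"
    by (simp add: span_span_Un Un_assoc)
  also have "\<dots> = W" using G U unfolding qd_def by simp
  finally have "qd X W (F \<union> G)" using I F G unfolding qd_def by simp
  moreover have "F \<subseteq> U" using F span_sup unfolding qd_def by blast
  then have "F \<inter> G = {}" using G indep_notin unfolding qd_def by blast
  ultimately show ?thesis by blast
qed

lemma dimq_add:
  assumes X: "subspace smul X" and U: "subspace smul U" and XU: "X \<subseteq> U" and UW: "U \<subseteq> W"
    and f: "fin X W"
  shows "fin X U \<and> fin U W \<and> dimq X W = dimq X U + dimq U W"
proof -
  obtain H where H: "qd X W H" using f fin_def by blast
  obtain F where F: "qd X U F" using qd_sub[OF X U XU UW H] by blast
  obtain G where G: "qd U W G" using qd_top[OF X U XU UW H] by blast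
  have FG: "qd X W (F \<union> G)" "F \<inter> G = {}" using qd_add[OF X F G] by auto
  have "card (F \<union> G) = card F + card G" using F G FG(2) unfolding qd_def by (simp add: card_Un_disjoint)
  then have "dimq X W = dimq X U + dimq U W" using dimq_eq[OF X FG(1)] dimq_eq[OF X F] dimq_eq[OF U G] by simp
  then show ?thesis using F G fin_def by blast
qed

lemma fin_trans:
  assumes X: "subspace smul X" and U: "subspace smul U" and f1: "fin X U" and f2: "fin U W"
  shows "fin X W \<and> dimq X W = dimq X U + dimq U W"
proof -
  obtain F where F: "qd X U F" using f1 fin_def by blast
  obtain G where G: "qd U W G" using f2 fin_def by blast
  have FG: "qd X W (F \<union> G)" "F \<inter> G = {}" using qd_add[OF X F G] by auto
  have "card (F \<union> G) = card F + card G" using F G FG(2) unfolding qd_def by (simp add: card_Un_disjoint)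
  then have "dimq X W = dimq X U + dimq U W" using dimq_eq[OF X FG(1)] dimq_eq[OF X F] dimq_eq[OF U G] by simp
  then show ?thesis using FG(1) fin_def by blast
qed

lemma dimq_le_card:
  assumes X: "subspace smul X" and T: "finite T"
  shows "fin X (span (X \<union> T)) \<and> dimq X (span (X \<union> T)) \<le> card T"
proof -
  obtain F where F: "F \<subseteq> T" "qd X (span (X \<union> T)) F" using qd_span_fin[OF X T] by blast
  have "dimq X (span (X \<union> T)) = card F" using dimq_eq[OF X F(2)] .
  moreover have "card F \<le> card T" using card_mono[OF T F(1)] .
  ultimately show ?thesis using F(2) fin_def by auto
qed

end

context lvs
begin

lemma ssum_span:
  assumes X: "subspace smul X" and Y: "subspace smul Y"
  shows "ssum X Y = span (X \<union> Y)"
proof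
  show "ssum X Y \<subseteq> span (X \<union> Y)"
  proof
    fix v assume "v \<in> ssum X Y"
    then obtain x y where "v = x + y" "x \<in> X" "y \<in> Y" unfolding ssum_def by blast
    then show "v \<in> span (X \<union> Y)" using span_base[of _ "X \<union> Y"] sub_add[OF span_sub] by simp
  qed
  have S: "subspace smul (ssum X Y)"
    unfolding subspace_def
  proof (intro conjI ballI allI)
    have "(0::'v) = 0 + 0" by simp
    then show "0 \<in> ssum X Y" unfolding ssum_def using sub_0[OF X] sub_0[OF Y] by blast
  next
    fix u v assume "u \<in> ssum X Y" "v \<in> ssum X Y"
    then obtain x y x' y' where "u = x + y" "x \<in> X" "y \<in> Y" "v = x' + y'" "x' \<in> X" "y' \<in> Y"
      unfolding ssum_def by blast
    then have "u + v = (x + x') + (y + y')" "x + x' \<in> X" "y + y' \<in> Y"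
      by (simp_all add: algebra_simps sub_add X Y)
    then show "u + v \<in> ssum X Y" unfolding ssum_def by blast
  next
    fix a u assume "u \<in> ssum X Y"
    then obtain x y where "u = x + y" "x \<in> X" "y \<in> Y" unfolding ssum_def by blast
    then have "smul a u = smul a x + smul a y" "smul a x \<in> X" "smul a y \<in> Y"
      by (simp_all add: add_r sub_smul X Y)
    then show "smul a u \<in> ssum X Y" unfolding ssum_def by blast
  qed
  have "X \<union> Y \<subseteq> ssum X Y"
  proof
    fix v assume "v \<in> X \<union> Y"
    then show "v \<in> ssum X Y"
    proof
      assume "v \<in> X" then have "v = v + 0" "0 \<in> Y" using sub_0[OF Y] by simp_all
      then show ?thesis unfolding ssum_def using \<open>v \<in> X\<close> by blast
    next
      assume "v \<in> Y" then have "v = 0 + v" "0 \<in> X" using sub_0[OF X] by simp_all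
      then show ?thesis unfolding ssum_def using \<open>v \<in> Y\<close> by blast
    qed
  qed
  then show "span (X \<union> Y) \<subseteq> ssum X Y" by (rule span_min[OF S])
qed

lemma qdim_imp:
  assumes X: "subspace smul X" and q: "qdim smul W X d"
  shows "\<exists>F. qd X W F \<and> card F = d"
proof -
  obtain v where v: "span (X \<union> v ` {..<d}) = W"
    and ind: "\<And>c. (\<Sum>i<d. smul (c i) (v i)) \<in> X \<Longrightarrow> \<forall>i<d. c i = 0"
    using q unfolding qdim_def by blast
  have inj: "inj_on v {..<d}"
  proof (rule inj_onI, rule ccontr)
    fix i j assume ij: "i \<in> {..<d}" "j \<in> {..<d}" "v i = v j" "i \<noteq> j"
    define c where "c k = (if k = i then 1 else if k = j then -1 else (0::'k))" for k
    have "(\<Sum>k<d. smul (c k) (v k)) = (\<Sum>k\<in>{i,j}. smul (c k) (v k))"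
      by (rule sum.mono_neutral_right) (use ij in \<open>auto simp: c_def\<close>)
    also have "\<dots> = smul 1 (v i) + smul (-1) (v j)" using ij by (simp add: c_def)
    also have "\<dots> = 0" using ij by (simp only: minus_l one_l) simp
    finally have "(\<Sum>k<d. smul (c k) (v k)) \<in> X" using sub_0[OF X] by simp
    from ind[OF this] ij have "c i = 0" by blast
    then show False by (simp add: c_def)
  qed
  define F where "F = v ` {..<d}"
  have cF: "card F = d" unfolding F_def using card_image[OF inj] by simp
  have "indep X F"
    unfolding indep_def
  proof (intro allI impI ballI)
    fix G c s assume G: "finite G" "G \<subseteq> F" "(\<Sum>s\<in>G. smul (c s) s) \<in> X" "s \<in> G"
    define c' where "c' k = (if v k \<in> G then c (v k) else 0)" for k
    define K where "K = {k\<in>{..<d}. v k \<in> G}"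
    have vK: "v ` K = G" using G(2) unfolding K_def F_def by blast
    have injK: "inj_on v K" using inj unfolding K_def by (rule inj_on_subset) blast
    have "(\<Sum>k<d. smul (c' k) (v k)) = (\<Sum>k<d. if v k \<in> G then smul (c (v k)) (v k) else 0)"
      by (rule sum.cong) (auto simp: c'_def)
    also have "\<dots> = (\<Sum>k\<in>K. smul (c (v k)) (v k))"
      unfolding K_def by (rule sum.inter_filter[symmetric]) simp
    also have "\<dots> = (\<Sum>s\<in>v ` K. smul (c s) s)" using sum.reindex[OF injK, of "\<lambda>s. smul (c s) s"] by simp
    finally have "(\<Sum>k<d. smul (c' k) (v k)) \<in> X" using G(3) vK by simp
    from ind[OF this] have z: "\<forall>k<d. c' k = 0" .
    obtain k where k: "k < d" "v k = s" using G(2,4) unfolding F_def by blast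
    then show "c s = 0" using z G(4) unfolding c'_def by force
  qed
  then have "qd X W F" unfolding qd_def F_def using v by simp
  then show ?thesis using cF by blast
qed

lemma imp_qdim:
  assumes X: "subspace smul X" and F: "qd X W F"
  shows "qdim smul W X (card F)"
proof -
  let ?d = "card F"
  obtain v where v: "bij_betw v {0..<?d} F" using ex_bij_betw_nat_finite F unfolding qd_def by blast
  have v': "bij_betw v {..<?d} F" using v by (simp add: atLeast0LessThan)
  have im: "v ` {..<?d} = F" and inj: "inj_on v {..<?d}" using v' unfolding bij_betw_def by auto
  have "span (X \<union> v ` {..<?d}) = W" using F im unfolding qd_def by simp
  moreover have "\<forall>c. (\<Sum>i<?d. smul (c i) (v i)) \<in> X \<longrightarrow> (\<forall>i<?d. c i = 0)"
  proof (intro allI impI)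
    fix c i assume S: "(\<Sum>i<?d. smul (c i) (v i)) \<in> X" and i: "i < ?d"
    define c' where "c' s = c (inv_into {..<?d} v s)" for s
    have "(\<Sum>s\<in>F. smul (c' s) s) = (\<Sum>s\<in>v ` {..<?d}. smul (c' s) s)" using im by simp
    also have "\<dots> = (\<Sum>k<?d. smul (c' (v k)) (v k))" using sum.reindex[OF inj] by simp
    also have "\<dots> = (\<Sum>k<?d. smul (c k) (v k))"
      by (rule sum.cong) (auto simp: c'_def inv_into_f_f[OF inj])
    finally have "(\<Sum>s\<in>F. smul (c' s) s) \<in> X" using S by simp
    then have "c' (v i) = 0" using indepD[of X F F c' "v i"] F i im unfolding qd_def by blast
    then show "c i = 0" using i by (simp add: c'_def inv_into_f_f[OF inj])
  qed
  ultimately show ?thesis unfolding qdim_def by blast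
qed

lemma qdim_iff:
  assumes X: "subspace smul X"
  shows "qdim smul W X d \<longleftrightarrow> fin X W \<and> dimq X W = d"
proof
  assume "qdim smul W X d"
  then obtain F where "qd X W F" "card F = d" using qdim_imp[OF X] by blast
  then show "fin X W \<and> dimq X W = d" using dimq_eq[OF X] fin_def by blast
next
  assume "fin X W \<and> dimq X W = d"
  then obtain F where "qd X W F" "dimq X W = d" using fin_def by blast
  then show "qdim smul W X d" using imp_qdim[OF X] dimq_eq[OF X] by metis
qed

end

context lvs
begin

lemma sum_ext0f:
  assumes "finite H" "G \<subseteq> H"
  shows "(\<Sum>s\<in>H. smul (if s \<in> G then c s else 0) (f s)) = (\<Sum>s\<in>G. smul (c s) (f s))"
proof -
  have "(\<Sum>s\<in>H. smul (if s \<in> G then c s else 0) (f s)) = (\<Sum>s\<in>H. if s \<in> G then smul (c s) (f s) else 0)"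
    by (rule sum.cong) auto
  also have "\<dots> = (\<Sum>s\<in>H \<inter> G. smul (c s) (f s))"
    using sum.inter_restrict[OF assms(1), of "\<lambda>s. smul (c s) (f s)" G] by simp
  also have "H \<inter> G = G" using assms(2) by blast
  finally show ?thesis .
qed

lemma sum_merge:
  assumes "finite G1" "finite G2"
  shows "(\<Sum>s\<in>G1 \<union> G2. smul ((if s \<in> G1 then c1 s else 0) + (if s \<in> G2 then c2 s else 0)) (f s))
       = (\<Sum>s\<in>G1. smul (c1 s) (f s)) + (\<Sum>s\<in>G2. smul (c2 s) (f s))"
proof -
  have fin: "finite (G1 \<union> G2)" using assms by simp
  show ?thesis
    unfolding add_l sum.distrib
    using sum_ext0f[OF fin, of G1 c1 f] sum_ext0f[OF fin, of G2 c2 f] by simp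
qed

lemma sum_merge_diff:
  assumes "finite G1" "finite G2"
  shows "(\<Sum>s\<in>G1 \<union> G2. smul ((if s \<in> G1 then c1 s else 0) - (if s \<in> G2 then c2 s else 0)) (f s))
       = (\<Sum>s\<in>G1. smul (c1 s) (f s)) - (\<Sum>s\<in>G2. smul (c2 s) (f s))"
proof -
  have fin: "finite (G1 \<union> G2)" using assms by simp
  show ?thesis
    unfolding diff_l sum_subtractf
    using sum_ext0f[OF fin, of G1 c1 f] sum_ext0f[OF fin, of G2 c2 f] by simp
qed

lemma coset_self: "subspace smul X \<Longrightarrow> u \<in> coset u X"
  unfolding coset_def using sub_0 by force

lemma coset_eq_iff:
  assumes X: "subspace smul X"
  shows "coset u X = coset w X \<longleftrightarrow> u - w \<in> X"
proof
  assume "coset u X = coset w X"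
  then have "u \<in> coset w X" using coset_self[OF X] by blast
  then obtain x where "u = w + x" "x \<in> X" unfolding coset_def by blast
  then show "u - w \<in> X" by simp
next
  assume d: "u - w \<in> X"
  show "coset u X = coset w X"
  proof
    show "coset u X \<subseteq> coset w X"
    proof
      fix v assume "v \<in> coset u X"
      then obtain x where x: "v = u + x" "x \<in> X" unfolding coset_def by blast
      then have "v = w + ((u - w) + x)" "(u - w) + x \<in> X" using d by (simp_all add: sub_add[OF X])
      then show "v \<in> coset w X" unfolding coset_def by blast
    qed
    show "coset w X \<subseteq> coset u X"
    proof
      fix v assume "v \<in> coset w X"
      then obtain x where x: "v = w + x" "x \<in> X" unfolding coset_def by blast
      have "w - u \<in> X" using sub_neg[OF X d] by simp
      then have "v = u + ((w - u) + x)" "(w - u) + x \<in> X" using x by (simp_all add: sub_add[OF X])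
      then show "v \<in> coset u X" unfolding coset_def by blast
    qed
  qed
qed

lemma qadd_coset:
  assumes X: "subspace smul X"
  shows "qadd (coset u X) (coset w X) = coset (u + w) X"
proof
  show "qadd (coset u X) (coset w X) \<subseteq> coset (u + w) X"
  proof
    fix v assume "v \<in> qadd (coset u X) (coset w X)"
    then obtain x y where "v = (u + x) + (w + y)" "x \<in> X" "y \<in> X" unfolding qadd_def coset_def by blast
    then have "v = (u + w) + (x + y)" "x + y \<in> X" by (simp_all add: algebra_simps sub_add[OF X])
    then show "v \<in> coset (u + w) X" unfolding coset_def by blast
  qed
  show "coset (u + w) X \<subseteq> qadd (coset u X) (coset w X)"
  proof
    fix v assume "v \<in> coset (u + w) X"
    then obtain x where x: "v = (u + w) + x" "x \<in> X" unfolding coset_def by blast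
    have "u + x \<in> coset u X" using x(2) unfolding coset_def by blast
    moreover have "w \<in> coset w X" using coset_self[OF X] .
    moreover have "v = (u + x) + w" using x by (simp add: algebra_simps)
    ultimately show "v \<in> qadd (coset u X) (coset w X)" unfolding qadd_def by blast
  qed
qed

lemma qsmul_coset:
  assumes X: "subspace smul X"
  shows "qsmul smul X c (coset u X) = coset (smul c u) X"
proof
  show "qsmul smul X c (coset u X) \<subseteq> coset (smul c u) X"
  proof
    fix v assume "v \<in> qsmul smul X c (coset u X)"
    then obtain x y where "v = smul c (u + x) + y" "x \<in> X" "y \<in> X" unfolding qsmul_def coset_def by blast
    then have "v = smul c u + (smul c x + y)" "smul c x + y \<in> X"
      by (simp_all add: add_r algebra_simps sub_add[OF X] sub_smul[OF X])
    then show "v \<in> coset (smul c u) X" unfolding coset_def by blast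
  qed
  show "coset (smul c u) X \<subseteq> qsmul smul X c (coset u X)"
  proof
    fix v assume "v \<in> coset (smul c u) X"
    then obtain x where x: "v = smul c u + x" "x \<in> X" unfolding coset_def by blast
    then show "v \<in> qsmul smul X c (coset u X)" unfolding qsmul_def using coset_self[OF X, of u] by blast
  qed
qed

end

context lvs
begin

lemma GG_build:
  assumes X: "subspace smul X" and IA: "indep {0} A" and SA: "span A = X"
    and IB: "indep X B" and SB: "span (X \<union> B) = UNIV" and AB: "A \<approx> B"
  shows "X \<in> GG smul"
proof -
  obtain \<phi> where bij: "bij_betw \<phi> A B" using AB unfolding eqpoll_def by blast
  have injA: "inj_on \<phi> A" and imA: "\<phi> ` A = B" using bij unfolding bij_betw_def by auto
  define Rel where "Rel x y \<longleftrightarrow> (\<exists>G c. finite G \<and> G \<subseteq> A \<and> x = (\<Sum>a\<in>G. smul (c a) a) \<and> y = (\<Sum>a\<in>G. smul (c a) (\<phi> a)))" for x y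
  have func: "y = y'" if R1: "Rel x y" and R2: "Rel x y'" for x y y'
  proof -
    obtain G1 c1 where 1: "finite G1" "G1 \<subseteq> A" "x = (\<Sum>a\<in>G1. smul (c1 a) a)" "y = (\<Sum>a\<in>G1. smul (c1 a) (\<phi> a))"
      using R1 unfolding Rel_def by blast
    obtain G2 c2 where 2: "finite G2" "G2 \<subseteq> A" "x = (\<Sum>a\<in>G2. smul (c2 a) a)" "y' = (\<Sum>a\<in>G2. smul (c2 a) (\<phi> a))"
      using R2 unfolding Rel_def by blast
    define e where "e a = (if a \<in> G1 then c1 a else 0) - (if a \<in> G2 then c2 a else 0)" for a
    have "(\<Sum>a\<in>G1 \<union> G2. smul (e a) a) = (\<Sum>a\<in>G1. smul (c1 a) a) - (\<Sum>a\<in>G2. smul (c2 a) a)"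
      unfolding e_def using sum_merge_diff[OF 1(1) 2(1), of c1 c2 "\<lambda>a. a"] by simp
    also have "\<dots> = 0" by (simp only: 1(3)[symmetric] 2(3)[symmetric] diff_self)
    finally have "(\<Sum>a\<in>G1 \<union> G2. smul (e a) a) \<in> {0}" by simp
    moreover have fU: "finite (G1 \<union> G2)" "G1 \<union> G2 \<subseteq> A" using 1(1,2) 2(1,2) by auto
    ultimately have z: "\<forall>a\<in>G1 \<union> G2. e a = 0" using indepD[OF IA fU] by blast
    have "(\<Sum>a\<in>G1 \<union> G2. smul (e a) (\<phi> a)) = (\<Sum>a\<in>G1. smul (c1 a) (\<phi> a)) - (\<Sum>a\<in>G2. smul (c2 a) (\<phi> a))"
      unfolding e_def using sum_merge_diff[OF 1(1) 2(1), of c1 c2 \<phi>] by simp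
    also have "\<dots> = y - y'" by (simp only: 1(4)[symmetric] 2(4)[symmetric])
    finally have "y - y' = (\<Sum>a\<in>G1 \<union> G2. smul (e a) (\<phi> a))" by simp
    also have "\<dots> = 0" using z by simp
    finally show ?thesis by simp
  qed
  have Rel_add: "Rel (x + x') (y + y')" if R1: "Rel x y" and R2: "Rel x' y'" for x y x' y'
  proof -
    obtain G1 c1 where 1: "finite G1" "G1 \<subseteq> A" "x = (\<Sum>a\<in>G1. smul (c1 a) a)" "y = (\<Sum>a\<in>G1. smul (c1 a) (\<phi> a))"
      using R1 unfolding Rel_def by blast
    obtain G2 c2 where 2: "finite G2" "G2 \<subseteq> A" "x' = (\<Sum>a\<in>G2. smul (c2 a) a)" "y' = (\<Sum>a\<in>G2. smul (c2 a) (\<phi> a))"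
      using R2 unfolding Rel_def by blast
    define e where "e a = (if a \<in> G1 then c1 a else 0) + (if a \<in> G2 then c2 a else 0)" for a
    have "(\<Sum>a\<in>G1 \<union> G2. smul (e a) a) = (\<Sum>a\<in>G1. smul (c1 a) a) + (\<Sum>a\<in>G2. smul (c2 a) a)"
      unfolding e_def using sum_merge[OF 1(1) 2(1), of c1 c2 "\<lambda>a. a"] by simp
    also have "\<dots> = x + x'" by (simp only: 1(3)[symmetric] 2(3)[symmetric])
    finally have e1: "x + x' = (\<Sum>a\<in>G1 \<union> G2. smul (e a) a)" by simp
    have "(\<Sum>a\<in>G1 \<union> G2. smul (e a) (\<phi> a)) = (\<Sum>a\<in>G1. smul (c1 a) (\<phi> a)) + (\<Sum>a\<in>G2. smul (c2 a) (\<phi> a))"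
      unfolding e_def using sum_merge[OF 1(1) 2(1), of c1 c2 \<phi>] by simp
    also have "\<dots> = y + y'" by (simp only: 1(4)[symmetric] 2(4)[symmetric])
    finally have e2: "y + y' = (\<Sum>a\<in>G1 \<union> G2. smul (e a) (\<phi> a))" by simp
    have fU: "finite (G1 \<union> G2)" "G1 \<union> G2 \<subseteq> A" using 1(1,2) 2(1,2) by auto
    show ?thesis unfolding Rel_def
      by (rule exI[of _ "G1 \<union> G2"], rule exI[of _ e]) (use fU e1 e2 in blast)
  qed
  have Rel_smul: "Rel (smul k x) (smul k y)" if R1: "Rel x y" for x y k
  proof -
    obtain G c where 1: "finite G" "G \<subseteq> A" "x = (\<Sum>a\<in>G. smul (c a) a)" "y = (\<Sum>a\<in>G. smul (c a) (\<phi> a))"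
      using R1 unfolding Rel_def by blast
    have e1: "smul k x = (\<Sum>a\<in>G. smul (k * c a) a)"
      by (simp only: 1(3) sum_r mult_l)
    have e2: "smul k y = (\<Sum>a\<in>G. smul (k * c a) (\<phi> a))"
      by (simp only: 1(4) sum_r mult_l)
    show ?thesis unfolding Rel_def
      by (rule exI[of _ G], rule exI[of _ "\<lambda>a. k * c a"]) (use 1(1,2) e1 e2 in blast)
  qed
  have Rel_tot: "\<exists>y. Rel x y" if "x \<in> X" for x
  proof -
    have "x \<in> span A" using that SA by simp
    then obtain G c where 1: "finite G" "G \<subseteq> A" "x = (\<Sum>a\<in>G. smul (c a) a)"
      unfolding in_span by blast
    show ?thesis unfolding Rel_def
      by (rule exI[of _ "\<Sum>a\<in>G. smul (c a) (\<phi> a)"], rule exI[of _ G], rule exI[of _ c]) (use 1 in blast)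
  qed
  define L where "L x = (THE y. Rel x y)" for x
  have RL: "Rel x (L x)" if xX: "x \<in> X" for x
  proof -
    obtain y0 where y0: "Rel x y0" using Rel_tot[OF xX] by blast
    show ?thesis unfolding L_def by (rule theI[of _ y0]) (use y0 func in blast)+
  qed
  have Lval: "L x = y" if R1: "Rel x y" and xX: "x \<in> X" for x y
    using func[OF RL[OF xX] R1] .
  have Rel_zero: "z = 0" if R1: "Rel z y" and yX: "y \<in> X" for z y
  proof -
    obtain G c where 1: "finite G" "G \<subseteq> A" "z = (\<Sum>a\<in>G. smul (c a) a)" "y = (\<Sum>a\<in>G. smul (c a) (\<phi> a))"
      using R1 unfolding Rel_def by blast
    define c' where "c' b = c (inv_into A \<phi> b)" for b
    have injG: "inj_on \<phi> G" using inj_on_subset[OF injA 1(2)] .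
    have "(\<Sum>b\<in>\<phi> ` G. smul (c' b) b) = (\<Sum>a\<in>G. smul (c' (\<phi> a)) (\<phi> a))"
      using sum.reindex[OF injG] by simp
    also have "\<dots> = y" unfolding 1
      by (rule sum.cong) (use 1(2) in \<open>auto simp: c'_def inv_into_f_f[OF injA]\<close>)
    finally have "(\<Sum>b\<in>\<phi> ` G. smul (c' b) b) \<in> X" using yX by simp
    moreover have "finite (\<phi> ` G)" "\<phi> ` G \<subseteq> B" using 1(1,2) imA by auto
    ultimately have "\<forall>b\<in>\<phi> ` G. c' b = 0" using indepD[OF IB] by blast
    then have "\<forall>a\<in>G. c a = 0" using 1(2) inv_into_f_f[OF injA] unfolding c'_def by (metis image_eqI subsetD)
    then show ?thesis using 1 by simp
  qed
  define g where "g x = coset (L x) X" for x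
  have AX: "A \<subseteq> X" using SA span_sup by blast
  have inj: "inj_on g X"
  proof (rule inj_onI)
    fix x x' assume xx: "x \<in> X" "x' \<in> X" "g x = g x'"
    then have d: "L x - L x' \<in> X" unfolding g_def using coset_eq_iff[OF X] by blast
    have "Rel (x + smul (-1) x') (L x + smul (-1) (L x'))"
      using Rel_add[OF RL[OF xx(1)] Rel_smul[OF RL[OF xx(2)]]] .
    moreover have "smul (-1) x' = - x'" "smul (-1) (L x') = - L x'" by (simp_all only: minus_l one_l)
    ultimately have "Rel (x - x') (L x - L x')" by simp
    then have "x - x' = 0" using Rel_zero d by blast
    then show "x = x'" by simp
  qed
  have surj: "g ` X = quotient_space X"
  proof
    show "g ` X \<subseteq> quotient_space X" unfolding g_def quotient_space_def by blast
    show "quotient_space X \<subseteq> g ` X"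
    proof
      fix Q assume "Q \<in> quotient_space X"
      then obtain v where Q: "Q = coset v X" unfolding quotient_space_def by blast
      have "v \<in> span (X \<union> B)" using SB by simp
      then obtain x0 G c where G: "x0 \<in> X" "finite G" "G \<subseteq> B" "v = x0 + (\<Sum>b\<in>G. smul (c b) b)"
        unfolding in_span_Un[OF X] by blast
      define G' where "G' = inv_into A \<phi> ` G"
      have G'A: "G' \<subseteq> A" unfolding G'_def using G(3) imA by (auto intro: inv_into_into)
      have imG': "\<phi> ` G' = G" unfolding G'_def by (rule image_inv_into_cancel[OF imA G(3)])
      have injG': "inj_on \<phi> G'" using inj_on_subset[OF injA G'A] .
      have fG': "finite G'" unfolding G'_def using G(2) by simp
      define z where "z = (\<Sum>a\<in>G'. smul (c (\<phi> a)) a)"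
      have y: "(\<Sum>a\<in>G'. smul (c (\<phi> a)) (\<phi> a)) = (\<Sum>b\<in>G. smul (c b) b)"
        using sum.reindex[OF injG', of "\<lambda>b. smul (c b) b"] imG' by simp
      have R: "Rel z (\<Sum>b\<in>G. smul (c b) b)" unfolding Rel_def z_def
        by (rule exI[of _ G'], rule exI[of _ "\<lambda>a. c (\<phi> a)"]) (use fG' G'A y in simp)
      have zX: "z \<in> X" unfolding z_def by (rule sub_lin[OF X]) (use G'A AX in blast)
      have "L z = (\<Sum>b\<in>G. smul (c b) b)" using Lval[OF R zX] .
      then have "g z = Q" unfolding g_def Q using coset_eq_iff[OF X] G sub_neg[OF X G(1)] by simp
      then show "Q \<in> g ` X" using zX by blast
    qed
  qed
  have gadd: "g (x + y) = qadd (g x) (g y)" if "x \<in> X" "y \<in> X" for x y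
  proof -
    have "L (x + y) = L x + L y" by (rule Lval[OF Rel_add[OF RL[OF that(1)] RL[OF that(2)]] sub_add[OF X that]])
    then show ?thesis unfolding g_def qadd_coset[OF X] by (simp only:)
  qed
  have gsmul: "g (smul k x) = qsmul smul X k (g x)" if "x \<in> X" for x k
  proof -
    have "L (smul k x) = smul k (L x)" by (rule Lval[OF Rel_smul[OF RL[OF that]] sub_smul[OF X that]])
    then show ?thesis unfolding g_def qsmul_coset[OF X] by (simp only:)
  qed
  have A1: "bij_betw g X (quotient_space X)" unfolding bij_betw_def using inj surj by blast
  have A2: "\<forall>x\<in>X. \<forall>y\<in>X. g (x + y) = qadd (g x) (g y)" using gadd by blast
  have A3: "\<forall>k. \<forall>x\<in>X. g (smul k x) = qsmul smul X k (g x)" using gsmul by blast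
  have "iso_to_quotient smul X"
    unfolding iso_to_quotient_def using A1 A2 A3 by blast
  then show ?thesis unfolding GG_def using X by blast
qed

end

context lvs
begin

lemma GG_extract:
  assumes GX: "X \<in> GG smul" and IA: "indep {0} A" and SA: "span A = X"
  shows "\<exists>B. indep X B \<and> span (X \<union> B) = UNIV \<and> A \<approx> B"
proof -
  have X: "subspace smul X" using GX unfolding GG_def by blast
  obtain g where bij: "bij_betw g X (quotient_space X)"
    and gadd: "\<forall>x\<in>X. \<forall>y\<in>X. g (x + y) = qadd (g x) (g y)"
    and gsmul: "\<forall>c. \<forall>x\<in>X. g (smul c x) = qsmul smul X c (g x)"
    using GX unfolding GG_def iso_to_quotient_def by blast
  have gadd': "g (x + y) = qadd (g x) (g y)" if "x \<in> X" "y \<in> X" for x y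
    using gadd that by blast
  have gsmul': "g (smul c x) = qsmul smul X c (g x)" if "x \<in> X" for x c
    using gsmul that by blast
  have inj: "inj_on g X" and im: "g ` X = quotient_space X" using bij unfolding bij_betw_def by auto
  have ex: "\<exists>u. g x = coset u X" if "x \<in> X" for x
  proof -
    have "g x \<in> quotient_space X" using im that by blast
    then show ?thesis unfolding quotient_space_def by blast
  qed
  define \<beta> where "\<beta> x = (SOME u. g x = coset u X)" for x
  have gb: "g x = coset (\<beta> x) X" if xX: "x \<in> X" for x
    unfolding \<beta>_def using ex[OF xX] by (rule someI_ex)
  have AX: "A \<subseteq> X" using SA span_sup by blast
  have g0: "g 0 = coset 0 X"
  proof -
    have "g (smul 0 0) = qsmul smul X 0 (g 0)" by (rule gsmul'[OF sub_0[OF X]])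
    also have "\<dots> = coset (smul 0 (\<beta> 0)) X" unfolding gb[OF sub_0[OF X]] qsmul_coset[OF X] ..
    finally show ?thesis by simp
  qed
  have gsum: "g (\<Sum>a\<in>G. smul (c a) a) = coset (\<Sum>a\<in>G. smul (c a) (\<beta> a)) X"
    if "finite G" "G \<subseteq> A" for G c
    using that
  proof (induction G rule: finite_induct)
    case empty
    then show ?case using g0 by simp
  next
    case (insert a G)
    have aX: "a \<in> X" using insert AX by blast
    have sX: "(\<Sum>a\<in>G. smul (c a) a) \<in> X" using insert AX by (intro sub_lin[OF X]) blast
    have "g (\<Sum>a\<in>insert a G. smul (c a) a) = g (smul (c a) a + (\<Sum>a\<in>G. smul (c a) a))"
      using insert by simp
    also have "\<dots> = qadd (g (smul (c a) a)) (g (\<Sum>a\<in>G. smul (c a) a))"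
      by (rule gadd'[OF sub_smul[OF X aX] sX])
    also have "g (smul (c a) a) = qsmul smul X (c a) (g a)" by (rule gsmul'[OF aX])
    also have "\<dots> = coset (smul (c a) (\<beta> a)) X" unfolding gb[OF aX] qsmul_coset[OF X] ..
    also have "g (\<Sum>a\<in>G. smul (c a) a) = coset (\<Sum>a\<in>G. smul (c a) (\<beta> a)) X"
      using insert.IH insert.prems by blast
    also have "qadd (coset (smul (c a) (\<beta> a)) X) (coset (\<Sum>a\<in>G. smul (c a) (\<beta> a)) X)
       = coset (\<Sum>a\<in>insert a G. smul (c a) (\<beta> a)) X"
      unfolding qadd_coset[OF X] using insert by simp
    finally show ?case .
  qed
  have injb: "inj_on \<beta> A"
  proof (rule inj_onI)
    fix a a' assume aa: "a \<in> A" "a' \<in> A" "\<beta> a = \<beta> a'"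
    have "g a = coset (\<beta> a) X" "g a' = coset (\<beta> a') X" using gb AX aa(1,2) by blast+
    then have "g a = g a'" using aa(3) by simp
    moreover have "a \<in> X" "a' \<in> X" using aa(1,2) AX by blast+
    ultimately show "a = a'" using inj_onD[OF inj] by blast
  qed
  define B where "B = \<beta> ` A"
  have AB: "A \<approx> B" unfolding B_def using inj_on_image_eqpoll_self[OF injb] eqpoll_sym by blast
  have IB: "indep X B"
    unfolding indep_def
  proof (intro allI impI ballI)
    fix G c b assume G: "finite G" "G \<subseteq> B" "(\<Sum>s\<in>G. smul (c s) s) \<in> X" "b \<in> G"
    define G' where "G' = inv_into A \<beta> ` G"
    have G'A: "G' \<subseteq> A" unfolding G'_def using G(2) unfolding B_def by (auto intro: inv_into_into)
    have imG': "\<beta> ` G' = G" unfolding G'_def by (rule image_inv_into_cancel[OF _ G(2)]) (simp add: B_def)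
    have injG': "inj_on \<beta> G'" using inj_on_subset[OF injb G'A] .
    have fG': "finite G'" unfolding G'_def using G(1) by simp
    have eqs: "(\<Sum>a\<in>G'. smul (c (\<beta> a)) (\<beta> a)) = (\<Sum>s\<in>G. smul (c s) s)"
      using sum.reindex[OF injG', of "\<lambda>s. smul (c s) s"] imG' by simp
    define z where "z = (\<Sum>a\<in>G'. smul (c (\<beta> a)) a)"
    have zX: "z \<in> X" unfolding z_def by (rule sub_lin[OF X]) (use G'A AX in blast)
    have "g z = coset (\<Sum>s\<in>G. smul (c s) s) X" unfolding z_def gsum[OF fG' G'A] eqs ..
    also have "\<dots> = coset 0 X" using coset_eq_iff[OF X] G(3) by simp
    also have "\<dots> = g 0" using g0 by simp
    finally have "z = 0" using inj_onD[OF inj _ zX sub_0[OF X]] by blast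
    then have "(\<Sum>a\<in>G'. smul (c (\<beta> a)) a) \<in> {0}" unfolding z_def by simp
    then have z0: "\<forall>a\<in>G'. c (\<beta> a) = 0"
      using indepD[OF IA fG' G'A, of "\<lambda>a. c (\<beta> a)"] by simp
    have "b \<in> \<beta> ` G'" using imG' G(4) by simp
    then show "c b = 0" using z0 by blast
  qed
  have SB: "span (X \<union> B) = UNIV"
  proof -
    have "v \<in> span (X \<union> B)" for v
    proof -
      have "coset v X \<in> g ` X" using im unfolding quotient_space_def by blast
      then obtain z where z: "z \<in> X" "g z = coset v X" by blast
      have "z \<in> span A" using z SA by simp
      then obtain G c where G: "finite G" "G \<subseteq> A" "z = (\<Sum>a\<in>G. smul (c a) a)"
        unfolding in_span by blast
      have "coset v X = coset (\<Sum>a\<in>G. smul (c a) (\<beta> a)) X" using z(2) gsum[OF G(1,2)] G(3) by simp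
      then have d: "v - (\<Sum>a\<in>G. smul (c a) (\<beta> a)) \<in> X" using coset_eq_iff[OF X] by blast
      have s: "(\<Sum>a\<in>G. smul (c a) (\<beta> a)) \<in> span (X \<union> B)"
        by (rule span_lin) (use G(2) span_base[of _ "X \<union> B"] in \<open>auto simp: B_def\<close>)
      have "v = (v - (\<Sum>a\<in>G. smul (c a) (\<beta> a))) + (\<Sum>a\<in>G. smul (c a) (\<beta> a))" by simp
      also have "\<dots> \<in> span (X \<union> B)" using d s span_base[of _ "X \<union> B"] by (intro sub_add[OF span_sub]) auto
      finally show ?thesis .
    qed
    then show ?thesis by blast
  qed
  show ?thesis using IB SB AB by blast
qed

lemma in_span_fin:
  assumes X: "subspace smul X" and v: "v \<in> span (X \<union> B)"
  shows "\<exists>F. finite F \<and> F \<subseteq> B \<and> v \<in> span (X \<union> F)"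
proof -
  obtain x G c where G: "x \<in> X" "finite G" "G \<subseteq> B" "v = x + (\<Sum>s\<in>G. smul (c s) s)"
    using v unfolding in_span_Un[OF X] by blast
  have "v \<in> span (X \<union> G)"
    unfolding in_span_Un[OF X] by (rule exI[of _ x], rule exI[of _ G], rule exI[of _ c]) (use G in simp)
  then show ?thesis using G by blast
qed

lemma basis_lepoll:
  assumes X: "subspace smul X" and IB: "indep X B" and B1: "B \<subseteq> span (X \<union> B')"
    and B2: "B' \<subseteq> span (X \<union> B)" and inf: "infinite B'"
  shows "B \<lesssim> B'"
proof -
  have "\<forall>b'\<in>B'. \<exists>F. finite F \<and> F \<subseteq> B \<and> b' \<in> span (X \<union> F)"
    using in_span_fin[OF X] B2 by blast
  then obtain F where F0: "\<forall>b'\<in>B'. finite (F b') \<and> F b' \<subseteq> B \<and> b' \<in> span (X \<union> F b')"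
    by (rule bchoice[THEN exE])
  have F: "finite (F b') \<and> F b' \<subseteq> B \<and> b' \<in> span (X \<union> F b')" if "b' \<in> B'" for b'
    using F0 that by blast
  have cover: "B \<subseteq> (\<Union>b'\<in>B'. F b')"
  proof
    fix b assume b: "b \<in> B"
    show "b \<in> (\<Union>b'\<in>B'. F b')"
    proof (rule ccontr)
      assume n: "b \<notin> (\<Union>b'\<in>B'. F b')"
      have "B' \<subseteq> span (X \<union> (B - {b}))"
      proof
        fix b' assume b': "b' \<in> B'"
        have "F b' \<subseteq> B - {b}" using F[OF b'] n b' by blast
        then have "span (X \<union> F b') \<subseteq> span (X \<union> (B - {b}))" by (intro span_mono) blast
        then show "b' \<in> span (X \<union> (B - {b}))" using F[OF b'] by blast
      qed
      moreover have "X \<subseteq> span (X \<union> (B - {b}))" using span_sup by blast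
      ultimately have "span (X \<union> B') \<subseteq> span (X \<union> (B - {b}))" by (intro span_min) auto
      then have "b \<in> span (X \<union> (B - {b}))" using B1 b by blast
      then show False using indep_notin_span[OF X IB b] by blast
    qed
  qed
  have "ordLeq3 (card_of (\<Union>b'\<in>B'. F b')) (card_of B')"
  proof (rule card_of_UNION_ordLeq_infinite[OF inf])
    show "ordLeq3 (card_of B') (card_of B')" by (rule ordLeq_refl[OF card_of_Card_order])
    show "\<forall>b'\<in>B'. ordLeq3 (card_of (F b')) (card_of B')"
    proof
      fix b' assume "b' \<in> B'"
      then have "F b' \<lesssim> B'" using finite_lepoll_infinite[OF inf] F by blast
      then show "ordLeq3 (card_of (F b')) (card_of B')" unfolding lepoll_def card_of_ordLeq .
    qed
  qed
  then have "(\<Union>b'\<in>B'. F b') \<lesssim> B'" unfolding lepoll_def card_of_ordLeq .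
  then show ?thesis using subset_imp_lepoll[OF cover] lepoll_trans by blast
qed

lemma basis_eqpoll:
  assumes X: "subspace smul X" and IB: "indep X B" and IB': "indep X B'"
    and S: "span (X \<union> B) = span (X \<union> B')"
  shows "B \<approx> B'"
proof -
  have B1: "B \<subseteq> span (X \<union> B')" using S span_sup by blast
  have B2: "B' \<subseteq> span (X \<union> B)" using S span_sup by blast
  show ?thesis
  proof (cases "finite B'")
    case True
    have 1: "finite B" "card B \<le> card B'" using steinitz[OF True X IB B1] by auto
    have 2: "card B' \<le> card B" using steinitz[OF 1(1) X IB' B2] by auto
    have "card B = card B'" using 1(2) 2 by simp
    then show ?thesis using eqpoll_iff_card[OF 1(1) True] by blast
  next
    case False
    have inf: "infinite B"
    proof
      assume "finite B"
      then have "finite B'" using steinitz[OF _ X IB' B2] by blast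
      then show False using False by blast
    qed
    show ?thesis
      by (rule lepoll_antisym) (rule basis_lepoll[OF X IB B1 B2 False], rule basis_lepoll[OF X IB' B2 B1 inf])
  qed
qed

end

lemma inf_Un_fin:
  assumes "infinite A" "finite F"
  shows "A \<union> F \<approx> A"
  using assms(2)
proof (induction F rule: finite_induct)
  case empty
  then show ?case by simp
next
  case (insert x F)
  have "A \<union> insert x F = insert x (A \<union> F)" by blast
  also have "insert x (A \<union> F) \<approx> A \<union> F" using assms(1) by (intro infinite_insert_eqpoll) simp
  also have "A \<union> F \<approx> A" using insert.IH .
  finally show ?case .
qed

lemma split_infinite:
  assumes inf: "infinite (M::'a set)"
  shows "\<exists>M1 M2. M1 \<union> M2 = M \<and> M1 \<inter> M2 = {} \<and> M1 \<approx> M2"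
proof -
  have "ordIso2 (card_of (M \<times> M)) (card_of M)" using card_of_Times_same_infinite[OF inf] .
  then have MM: "M \<times> M \<approx> M" unfolding eqpoll_iff_card_of_ordIso .
  have "(UNIV::bool set) \<lesssim> M" by (rule finite_lepoll_infinite[OF inf]) simp
  then have "M \<times> (UNIV::bool set) \<lesssim> M \<times> M" by (intro times_lepoll_mono) auto
  then have le1: "M \<times> (UNIV::bool set) \<lesssim> M" using MM lepoll_trans2 by blast
  have le2: "M \<lesssim> M \<times> (UNIV::bool set)"
    unfolding lepoll_def by (rule exI[of _ "\<lambda>x. (x, True)"]) (auto simp: inj_on_def)
  have "M \<times> (UNIV::bool set) \<approx> M" using lepoll_antisym[OF le1 le2] .
  then obtain h where h: "bij_betw h (M \<times> (UNIV::bool set)) M" unfolding eqpoll_def by blast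
  have inj: "inj_on h (M \<times> UNIV)" and im: "h ` (M \<times> UNIV) = M" using h unfolding bij_betw_def by auto
  define M1 where "M1 = (\<lambda>x. h (x, True)) ` M"
  define M2 where "M2 = (\<lambda>x. h (x, False)) ` M"
  have i1: "inj_on (\<lambda>x. h (x, True)) M" using inj unfolding inj_on_def by auto
  have i2: "inj_on (\<lambda>x. h (x, False)) M" using inj unfolding inj_on_def by auto
  have "M1 \<approx> M" unfolding M1_def by (rule inj_on_image_eqpoll_self[OF i1])
  moreover have "M2 \<approx> M" unfolding M2_def by (rule inj_on_image_eqpoll_self[OF i2])
  ultimately have e: "M1 \<approx> M2" using eqpoll_sym eqpoll_trans by blast
  have u: "M1 \<union> M2 = M"
  proof
    show "M1 \<union> M2 \<subseteq> M" unfolding M1_def M2_def using im by blast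
    show "M \<subseteq> M1 \<union> M2"
    proof
      fix y assume "y \<in> M"
      then obtain p where p: "p \<in> M \<times> UNIV" "y = h p" using im by (metis imageE)
      obtain x b where "p = (x, b)" by (cases p)
      then show "y \<in> M1 \<union> M2" using p unfolding M1_def M2_def by (cases b) auto
    qed
  qed
  have d: "M1 \<inter> M2 = {}"
  proof (rule ccontr)
    assume "M1 \<inter> M2 \<noteq> {}"
    then obtain x x' where "x \<in> M" "x' \<in> M" "h (x, True) = h (x', False)" unfolding M1_def M2_def by blast
    then have "(x, True) = (x', False)" using inj_onD[OF inj] by blast
    then show False by simp
  qed
  show ?thesis using u d e by blast
qed

context lvs
begin

lemma span_insert0[simp]: "span (insert 0 S) = span S"
  by (subst insert_is_Un) (rule span_zero_Un)

lemma GG_basis_infinite: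
  assumes ID: "infinite_dimensional smul" and GX: "X \<in> GG smul" and IA: "indep {0} A" and SA: "span A = X"
  shows "infinite A"
proof
  assume fA: "finite A"
  obtain B where B: "indep X B" "span (X \<union> B) = UNIV" "A \<approx> B" using GG_extract[OF GX IA SA] by blast
  have fB: "finite B" using eqpoll_finite_iff[OF B(3)] fA by simp
  have "span (A \<union> B) = span (X \<union> B)" using SA span_span_Un[of A B] by simp
  then have "span (A \<union> B) = UNIV" using B(2) by simp
  then show False using ID fA fB unfolding infinite_dimensional_def by blast
qed

lemma GG_sub: "X \<in> GG smul \<Longrightarrow> subspace smul X"
  unfolding GG_def by blast

lemma GG_not_fin:
  assumes ID: "infinite_dimensional smul" and GX: "X \<in> GG smul"
  shows "\<not> fin X UNIV"
proof
  assume "fin X UNIV"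
  then obtain F where F: "qd X UNIV F" unfolding fin_def by blast
  have X: "subspace smul X" using GG_sub[OF GX] .
  obtain A where A: "A \<subseteq> X" "indep {0} A" "span A = X" using basis_exists[OF X] by blast
  obtain B where B: "indep X B" "span (X \<union> B) = UNIV" "A \<approx> B" using GG_extract[OF GX A(2,3)] by blast
  have "B \<approx> F" by (rule basis_eqpoll[OF X B(1)]) (use F B(2) in \<open>auto simp: qd_def\<close>)
  then have "finite B" using F eqpoll_finite_iff unfolding qd_def by blast
  then have "finite A" using B(3) eqpoll_finite_iff by blast
  then show False using GG_basis_infinite[OF ID GX A(2,3)] by blast
qed

lemma GG_perturb:
  assumes ID: "infinite_dimensional smul" and GX: "X \<in> GG smul" and Z: "subspace smul Z"
    and W0: "subspace smul W0" and WX: "W0 \<subseteq> X" and WZ: "W0 \<subseteq> Z"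
    and fX: "fin W0 X" and fZ: "fin W0 Z"
  shows "Z \<in> GG smul"
proof -
  have X: "subspace smul X" using GG_sub[OF GX] .
  obtain xs where xs: "qd W0 X xs" using fX unfolding fin_def by blast
  obtain zs' where zs': "qd W0 Z zs'" using fZ unfolding fin_def by blast
  define S where "S = span (X \<union> Z)"
  have SX: "S = span (X \<union> zs')"
  proof -
    have "span (X \<union> Z) = span (X \<union> span (W0 \<union> zs'))" using zs' unfolding qd_def by simp
    also have "\<dots> = span (X \<union> (W0 \<union> zs'))" by (rule span_span_Un2)
    also have "X \<union> (W0 \<union> zs') = X \<union> zs'" using WX by blast
    finally show ?thesis unfolding S_def .
  qed
  have SZ: "S = span (Z \<union> xs)"
  proof -
    have "span (X \<union> Z) = span (Z \<union> X)" by (simp add: Un_commute)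
    also have "\<dots> = span (Z \<union> span (W0 \<union> xs))" using xs unfolding qd_def by simp
    also have "\<dots> = span (Z \<union> (W0 \<union> xs))" by (rule span_span_Un2)
    also have "Z \<union> (W0 \<union> xs) = Z \<union> xs" using WZ by blast
    finally show ?thesis unfolding S_def .
  qed
  obtain zs where zs: "zs \<subseteq> zs'" "qd X S zs"
    using qd_span_fin[OF X, of zs'] zs' SX unfolding qd_def by auto
  obtain xs'' where xs'': "xs'' \<subseteq> xs" "qd Z S xs''"
    using qd_span_fin[OF Z, of xs] xs SZ unfolding qd_def by auto
  obtain A0 where A0: "A0 \<subseteq> W0" "indep {0} A0" "span A0 = W0" using basis_exists[OF W0] by blast
  have SS: "subspace smul S" unfolding S_def by simp
  obtain D where D: "indep S D" "UNIV \<subseteq> span (S \<union> D)" using zorn_indep[OF SS, of UNIV] by blast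
  have IAX: "indep {0} (A0 \<union> xs)"
    by (rule indep_union[OF sub_zero A0(2)]) (use xs A0(3) in \<open>simp add: qd_def span_zero_Un\<close>)
  have SAX: "span (A0 \<union> xs) = X"
    using span_span_Un[of A0 xs] A0(3) xs unfolding qd_def by simp
  have ICX: "indep X (zs \<union> D)"
    by (rule indep_union[OF X]) (use zs D in \<open>simp_all add: qd_def\<close>)
  have SCX: "span (X \<union> (zs \<union> D)) = UNIV"
  proof -
    have "span (X \<union> (zs \<union> D)) = span (span (X \<union> zs) \<union> D)" by (simp add: span_span_Un Un_assoc)
    also have "\<dots> = span (S \<union> D)" using zs unfolding qd_def by simp
    finally show ?thesis using D(2) by blast
  qed
  obtain B where B: "indep X B" "span (X \<union> B) = UNIV" "A0 \<union> xs \<approx> B"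
    using GG_extract[OF GX IAX SAX] by blast
  have "B \<approx> zs \<union> D" by (rule basis_eqpoll[OF X B(1) ICX]) (simp add: B(2) SCX)
  then have E1: "A0 \<union> xs \<approx> zs \<union> D" using B(3) eqpoll_trans by blast
  have infAX: "infinite (A0 \<union> xs)" using GG_basis_infinite[OF ID GX IAX SAX] .
  have fxs: "finite xs" using xs unfolding qd_def by blast
  have fzs: "finite zs" "finite zs'" using zs zs' unfolding qd_def by auto
  have fxs'': "finite xs''" using xs'' unfolding qd_def by blast
  have infA0: "infinite A0" using infAX fxs by simp
  have "infinite (zs \<union> D)" using E1 infAX eqpoll_finite_iff by blast
  then have infD: "infinite D" using fzs by simp
  have "A0 \<approx> A0 \<union> xs" using inf_Un_fin[OF infA0 fxs] eqpoll_sym by blast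
  also have "\<dots> \<approx> zs \<union> D" using E1 .
  also have "zs \<union> D = D \<union> zs" by blast
  also have "D \<union> zs \<approx> D" using inf_Un_fin[OF infD fzs(1)] .
  finally have A0D: "A0 \<approx> D" .
  have IAZ: "indep {0} (A0 \<union> zs')"
    by (rule indep_union[OF sub_zero A0(2)]) (use zs' A0(3) in \<open>simp add: qd_def span_zero_Un\<close>)
  have SAZ: "span (A0 \<union> zs') = Z"
    using span_span_Un[of A0 zs'] A0(3) zs' unfolding qd_def by simp
  have ICZ: "indep Z (xs'' \<union> D)"
    by (rule indep_union[OF Z]) (use xs'' D in \<open>simp_all add: qd_def\<close>)
  have SCZ: "span (Z \<union> (xs'' \<union> D)) = UNIV"
  proof -
    have "span (Z \<union> (xs'' \<union> D)) = span (span (Z \<union> xs'') \<union> D)" by (simp add: span_span_Un Un_assoc)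
    also have "\<dots> = span (S \<union> D)" using xs'' unfolding qd_def by simp
    finally show ?thesis using D(2) by blast
  qed
  have "A0 \<union> zs' \<approx> A0" using inf_Un_fin[OF infA0 fzs(2)] .
  also have "A0 \<approx> D" using A0D .
  also have "D \<approx> D \<union> xs''" using inf_Un_fin[OF infD fxs''] eqpoll_sym by blast
  also have "D \<union> xs'' = xs'' \<union> D" by blast
  finally have "A0 \<union> zs' \<approx> xs'' \<union> D" .
  then show ?thesis using GG_build[OF Z IAZ SAZ ICZ SCZ] by blast
qed

lemma GG_exists:
  assumes ID: "infinite_dimensional smul"
  shows "\<exists>X Y. X \<in> GG smul \<and> Y \<in> GG smul \<and> subspace smul Y \<and> X \<inter> Y = {0} \<and> ssum X Y = UNIV"
proof -
  obtain M where M: "indep {0} M" "span M = UNIV" using basis_exists[OF sub_UNIV] by blast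
  have infM: "infinite M" using ID M(2) unfolding infinite_dimensional_def by blast
  obtain M1 M2 where S: "M1 \<union> M2 = M" "M1 \<inter> M2 = {}" "M1 \<approx> M2" using split_infinite[OF infM] by blast
  define X where "X = span M1"
  define Y where "Y = span M2"
  have "indep (span ({0} \<union> M1)) M2" by (rule indep_split[OF sub_zero]) (use M(1) S in auto)
  then have I12: "indep (span M1) M2" unfolding span_zero_Un .
  have S': "M2 \<union> M1 = M" "M2 \<inter> M1 = {}" using S(1,2) by blast+
  have "indep (span ({0} \<union> M2)) M1" by (rule indep_split[OF sub_zero]) (simp_all only: S' M(1))
  then have I21: "indep (span M2) M1" unfolding span_zero_Un .
  have U: "span (M1 \<union> M2) = UNIV" using S M by simp
  have GX: "X \<in> GG smul"
  proof (rule GG_build)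
    show "subspace smul X" unfolding X_def by simp
    show "indep {0} M1" using indep_mono[OF M(1)] S by blast
    show "span M1 = X" unfolding X_def ..
    show "indep X M2" using I12 unfolding X_def .
    show "span (X \<union> M2) = UNIV" unfolding X_def span_span_Un using U .
    show "M1 \<approx> M2" using S(3) .
  qed
  have GY: "Y \<in> GG smul"
  proof (rule GG_build)
    show "subspace smul Y" unfolding Y_def by simp
    show "indep {0} M2" using indep_mono[OF M(1)] S by blast
    show "span M2 = Y" unfolding Y_def ..
    show "indep Y M1" using I21 unfolding Y_def .
    show "span (Y \<union> M1) = UNIV" unfolding Y_def span_span_Un using U by (simp add: Un_commute)
    show "M2 \<approx> M1" using S(3) eqpoll_sym by blast
  qed
  have XY: "X \<inter> Y = {0}"
  proof
    show "X \<inter> Y \<subseteq> {0}"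
    proof
      fix v assume v: "v \<in> X \<inter> Y"
      then have "v \<in> span M2" unfolding Y_def by blast
      then obtain G c where G: "finite G" "G \<subseteq> M2" "v = (\<Sum>s\<in>G. smul (c s) s)" unfolding in_span by blast
      have "(\<Sum>s\<in>G. smul (c s) s) \<in> span M1" using v G(3) unfolding X_def by blast
      then have "\<forall>s\<in>G. c s = 0" using indepD[OF I12 G(1,2)] by blast
      then show "v \<in> {0}" using G(3) by simp
    qed
    show "{0} \<subseteq> X \<inter> Y" unfolding X_def Y_def by simp
  qed
  have "ssum X Y = span (X \<union> Y)" by (rule ssum_span) (simp_all add: X_def Y_def)
  also have "\<dots> = span (M1 \<union> M2)" unfolding X_def Y_def span_span_Un span_span_Un2 ..
  finally have "ssum X Y = UNIV" using U by simp
  moreover have "subspace smul Y" unfolding Y_def by simp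
  ultimately show ?thesis using GX GY XY by blast
qed

end

context lvs
begin

definition Rq :: "'v set \<Rightarrow> 'v set \<Rightarrow> bool" where
  "Rq X Y \<longleftrightarrow> fin X (span (X \<union> Y)) \<and> fin Y (span (X \<union> Y)) \<and> dimq X (span (X \<union> Y)) = dimq Y (span (X \<union> Y))"

lemma Rq_iff:
  assumes X: "subspace smul X" and Y: "subspace smul Y"
  shows "(\<exists>d. qdim smul (ssum X Y) X d \<and> qdim smul (ssum X Y) Y d) \<longleftrightarrow> Rq X Y"
  unfolding ssum_span[OF X Y] qdim_iff[OF X] qdim_iff[OF Y] Rq_def by auto

lemma span_self_Un: "subspace smul X \<Longrightarrow> span (X \<union> X) = X"
  by (simp add: span_of_sub)

lemma Rq_refl: "subspace smul X \<Longrightarrow> Rq X X"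
  unfolding Rq_def by (simp add: span_of_sub fin_refl)

lemma edge_props:
  assumes "grassmann_edge smul X Y"
  shows "X \<in> GG smul \<and> Y \<in> GG smul \<and> Rq X Y \<and> fin X (span (X \<union> Y)) \<and> dimq X (span (X \<union> Y)) = 1"
proof -
  have G: "X \<in> GG smul" "Y \<in> GG smul" and A: "adjacent smul X Y" using assms unfolding grassmann_edge_def by auto
  have X: "subspace smul X" and Y: "subspace smul Y" using G GG_sub by auto
  have "qdim smul (ssum X Y) X 1" "qdim smul (ssum X Y) Y 1" using A unfolding adjacent_def by auto
  then have "fin X (span (X \<union> Y)) \<and> dimq X (span (X \<union> Y)) = 1" "fin Y (span (X \<union> Y)) \<and> dimq Y (span (X \<union> Y)) = 1"
    unfolding ssum_span[OF X Y] qdim_iff[OF X] qdim_iff[OF Y] by auto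
  then show ?thesis using G unfolding Rq_def by auto
qed

lemma Rq_trans:
  assumes X: "subspace smul X" and Y: "subspace smul Y" and Z: "subspace smul Z"
    and R1: "Rq X Y" and R2: "Rq Y Z"
  shows "Rq X Z"
proof -
  define P where "P = span (X \<union> Y)"
  define Q where "Q = span (Y \<union> Z)"
  define S where "S = span (X \<union> Y \<union> Z)"
  define P' where "P' = span (X \<union> Z)"
  have sP: "subspace smul P" "subspace smul Q" "subspace smul S" "subspace smul P'"
    unfolding P_def Q_def S_def P'_def by simp_all
  have fXP: "fin X P" and fYP: "fin Y P" and eP: "dimq X P = dimq Y P" using R1 unfolding Rq_def P_def by auto
  have fYQ: "fin Y Q" and fZQ: "fin Z Q" and eQ: "dimq Y Q = dimq Z Q" using R2 unfolding Rq_def Q_def by auto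
  obtain G where G: "qd Y Q G" using fYQ unfolding fin_def by blast
  have PS: "S = span (P \<union> G)"
  proof
    have "X \<union> Y \<union> Z \<subseteq> span (P \<union> G)"
    proof -
      have "X \<union> Y \<subseteq> P" unfolding P_def by (rule span_sup)
      moreover have "P \<subseteq> span (P \<union> G)" using span_sup by blast
      moreover have "Z \<subseteq> Q" unfolding Q_def using span_sup by blast
      moreover have "Q \<subseteq> span (P \<union> G)"
      proof -
        have "Q = span (Y \<union> G)" using G unfolding qd_def by simp
        also have "\<dots> \<subseteq> span (P \<union> G)" unfolding P_def by (rule span_mono) (use span_sup in blast)
        finally show ?thesis .
      qed
      ultimately show ?thesis by blast
    qed
    then show "S \<subseteq> span (P \<union> G)" unfolding S_def by (rule span_min[OF span_sub])
    have "P \<subseteq> S" unfolding P_def S_def by (rule span_mono) blast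
    moreover have "G \<subseteq> S"
    proof -
      have "G \<subseteq> Q" using G span_sup unfolding qd_def by blast
      moreover have "Q \<subseteq> S" unfolding Q_def S_def by (rule span_mono) blast
      ultimately show ?thesis by blast
    qed
    ultimately show "span (P \<union> G) \<subseteq> S" by (intro span_min[OF sP(3)]) blast
  qed
  have fPS: "fin P S" unfolding PS using fin_span[OF sP(1)] G unfolding qd_def by blast
  have XP: "X \<subseteq> P" "Y \<subseteq> P" unfolding P_def using span_sup by blast+
  have YQ: "Y \<subseteq> Q" "Z \<subseteq> Q" unfolding Q_def using span_sup by blast+
  have QS: "Q \<subseteq> S" "P \<subseteq> S" unfolding Q_def P_def S_def by (rule span_mono, blast)+
  have t1: "fin X S \<and> dimq X S = dimq X P + dimq P S" using fin_trans[OF X sP(1) fXP fPS] .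
  have t2: "fin Y S \<and> dimq Y S = dimq Y P + dimq P S" using fin_trans[OF Y sP(1) fYP fPS] .
  have t3: "fin Y Q \<and> fin Q S \<and> dimq Y S = dimq Y Q + dimq Q S"
    using dimq_add[OF Y sP(2) YQ(1) QS(1)] t2 by blast
  have t4: "fin Z S \<and> dimq Z S = dimq Z Q + dimq Q S" using fin_trans[OF Z sP(2) fZQ] t3 by blast
  have eS: "dimq X S = dimq Z S" using t1 t2 t3 t4 eP eQ by simp
  have P'S: "P' \<subseteq> S" unfolding P'_def S_def by (rule span_mono) blast
  have XP': "X \<subseteq> P'" "Z \<subseteq> P'" unfolding P'_def using span_sup by blast+
  have a1: "fin X P' \<and> fin P' S \<and> dimq X S = dimq X P' + dimq P' S"
    using dimq_add[OF X sP(4) XP'(1) P'S] t1 by blast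
  have a2: "fin Z P' \<and> fin P' S \<and> dimq Z S = dimq Z P' + dimq P' S"
    using dimq_add[OF Z sP(4) XP'(2) P'S] t4 by blast
  show ?thesis unfolding Rq_def P'_def[symmetric] using a1 a2 eS by simp
qed

lemma Rq_sym: "Rq X Y \<Longrightarrow> Rq Y X"
  unfolding Rq_def by (simp add: Un_commute)

lemma component_sub:
  assumes GX: "X \<in> GG smul" and C: "(grassmann_edge smul)\<^sup>*\<^sup>* X Y"
  shows "Y \<in> GG smul \<and> Rq X Y"
  using C
proof (induction rule: rtranclp_induct)
  case base
  then show ?case using GX Rq_refl GG_sub by blast
next
  case (step Y Z)
  have e: "Y \<in> GG smul" "Z \<in> GG smul" "Rq Y Z" using edge_props[OF step(2)] by auto
  have "Rq X Z" using Rq_trans[OF GG_sub[OF GX] GG_sub[OF e(1)] GG_sub[OF e(2)]] step(3) e(3) by blast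
  then show ?case using e by blast
qed

lemma lower_bound:
  assumes Y: "subspace smul Y"
  shows "(grassmann_edge smul ^^ k) Y Z \<Longrightarrow> fin Y (span (Y \<union> Z)) \<and> dimq Y (span (Y \<union> Z)) \<le> k"
proof (induction k arbitrary: Z)
  case 0
  then have "Z = Y" by simp
  then show ?case using Y by (simp add: span_of_sub fin_refl dimq_refl)
next
  case (Suc k)
  obtain Z0 where Z0: "(grassmann_edge smul ^^ k) Y Z0" "grassmann_edge smul Z0 Z"
    using Suc.prems by (rule relpowp_Suc_E)
  have IH: "fin Y (span (Y \<union> Z0))" "dimq Y (span (Y \<union> Z0)) \<le> k" using Suc.IH[OF Z0(1)] by auto
  have e: "Z0 \<in> GG smul" "fin Z0 (span (Z0 \<union> Z))" using edge_props[OF Z0(2)] by auto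
  obtain G where G: "qd Z0 (span (Z0 \<union> Z)) G" "card G = 1"
    using edge_props[OF Z0(2)] dimq_eq[OF GG_sub[OF e(1)]] unfolding fin_def by metis
  define U where "U = span (Y \<union> Z0)"
  define T where "T = span (U \<union> G)"
  have fG: "finite G" using G unfolding qd_def by blast
  have sU: "subspace smul U" unfolding U_def by simp
  have t1: "fin U T \<and> dimq U T \<le> 1" unfolding T_def using dimq_le_card[OF sU fG] G(2) by simp
  have t2: "fin Y T \<and> dimq Y T = dimq Y U + dimq U T" using fin_trans[OF Y sU] IH(1) t1 unfolding U_def by blast
  have YT: "Y \<subseteq> span (Y \<union> Z)" using span_sup by blast
  have ZT: "span (Y \<union> Z) \<subseteq> T"
  proof (rule span_min)
    show "subspace smul T" unfolding T_def by simp
    have "Y \<subseteq> U" unfolding U_def using span_sup by blast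
    moreover have "U \<subseteq> T" unfolding T_def using span_sup by blast
    moreover have "Z \<subseteq> T"
    proof -
      have "Z \<subseteq> span (Z0 \<union> G)" using G(1) span_sup unfolding qd_def by blast
      also have "\<dots> \<subseteq> T" unfolding T_def U_def by (rule span_mono) (use span_sup in blast)
      finally show ?thesis .
    qed
    ultimately show "Y \<union> Z \<subseteq> T" by blast
  qed
  have "fin Y (span (Y \<union> Z)) \<and> fin (span (Y \<union> Z)) T \<and> dimq Y T = dimq Y (span (Y \<union> Z)) + dimq (span (Y \<union> Z)) T"
    using dimq_add[OF Y span_sub YT ZT] t2 by blast
  then show ?case using t1 t2 IH(2) unfolding U_def by auto
qed

end

context lvs
begin

lemma path_exists:
  assumes ID: "infinite_dimensional smul" and GY: "Y \<in> GG smul"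
  shows "X \<in> GG smul \<Longrightarrow> Rq X Y \<Longrightarrow> dimq X (span (X \<union> Y)) = d \<Longrightarrow> (grassmann_edge smul)\<^sup>*\<^sup>* X Y"
proof (induction d arbitrary: X rule: less_induct)
  case (less d X)
  have GX: "X \<in> GG smul" using less.prems(1) .
  have X: "subspace smul X" using GG_sub[OF GX] .
  have Y: "subspace smul Y" using GG_sub[OF GY] .
  define P where "P = span (X \<union> Y)"
  have sP: "subspace smul P" unfolding P_def by simp
  have fXP: "fin X P" and fYP: "fin Y P" and eP: "dimq X P = dimq Y P"
    using less.prems(2) unfolding Rq_def P_def by auto
  have dX: "dimq X P = d" using less.prems(3) unfolding P_def .
  show ?case
  proof (cases "d = 0")
    case True
    have "P = X" using dimq_zero[OF X fXP] dX True by simp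
    moreover have "P = Y" using dimq_zero[OF Y fYP] dX eP True by simp
    ultimately show ?thesis by simp
  next
    case False
    obtain y where y: "y \<in> Y" "y \<notin> X"
    proof (rule ccontr)
      assume "\<not> thesis"
      then have "Y \<subseteq> X" using that by blast
      then have "P = X" unfolding P_def using span_of_sub[OF X] by (simp add: Un_absorb2)
      then have "dimq X P = 0" using dimq_refl[OF X] by simp
      then show False using dX False by simp
    qed
    obtain x where x: "x \<in> X" "x \<notin> Y"
    proof (rule ccontr)
      assume "\<not> thesis"
      then have "X \<subseteq> Y" using that by blast
      then have "P = Y" unfolding P_def using span_of_sub[OF Y] by (simp add: Un_absorb1)
      then have "dimq Y P = 0" using dimq_refl[OF Y] by simp
      then show False using dX eP False by simp
    qed
    define W where "W = X \<inter> Y"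
    have sW: "subspace smul W" unfolding W_def using sub_Int[OF X Y] .
    define X1 where "X1 = span (W \<union> {x})"
    obtain M where M: "M \<subseteq> X" "indep X1 M" "X \<subseteq> span (X1 \<union> M)"
      using zorn_indep[of X1 X] unfolding X1_def by auto
    define H where "H = span (W \<union> M)"
    have sH: "subspace smul H" unfolding H_def by simp
    have xW: "x \<notin> W" unfolding W_def using x by blast
    have I1: "indep W {x}" using indep_single[OF sW xW] .
    have I2: "indep W ({x} \<union> M)" by (rule indep_union[OF sW I1]) (use M(2) in \<open>simp add: X1_def\<close>)
    have xM: "x \<notin> M"
    proof
      assume "x \<in> M"
      moreover have "x \<in> X1" unfolding X1_def by (rule span_base) simp
      ultimately show False using indep_notin[OF M(2)] by blast
    qed
    have "x \<notin> span (W \<union> (({x} \<union> M) - {x}))" using indep_notin_span[OF sW I2] by blast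
    moreover have "({x} \<union> M) - {x} = M" using xM by blast
    ultimately have xH: "x \<notin> H" unfolding H_def by simp
    have WH: "W \<subseteq> H" "M \<subseteq> H" unfolding H_def using span_sup by blast+
    have HX: "H \<subseteq> X" unfolding H_def by (rule span_min[OF X]) (use M(1) in \<open>auto simp: W_def\<close>)
    have XH: "X = span (H \<union> {x})"
    proof
      have "span (X1 \<union> M) = span ((W \<union> {x}) \<union> M)" unfolding X1_def by (rule span_span_Un)
      also have "\<dots> \<subseteq> span (H \<union> {x})" by (rule span_mono) (use WH in blast)
      finally show "X \<subseteq> span (H \<union> {x})" using M(3) by blast
      show "span (H \<union> {x}) \<subseteq> X" by (rule span_min[OF X]) (use HX x in blast)
    qed
    have qHX: "qd H X {x}" unfolding qd_def using indep_single[OF sH xH] XH by simp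
    have yH: "y \<notin> H" using HX y by blast
    define X' where "X' = span (H \<union> {y})"
    have sX': "subspace smul X'" unfolding X'_def by simp
    have qHX': "qd H X' {y}" unfolding qd_def X'_def using indep_single[OF sH yH] by simp
    have HX': "H \<subseteq> X'" unfolding X'_def using span_sup by blast
    have yX': "y \<in> X'" unfolding X'_def by (rule span_base) simp
    have GX': "X' \<in> GG smul"
      by (rule GG_perturb[OF ID GX sX' sH HX HX']) (use qHX qHX' in \<open>auto simp: fin_def\<close>)
    have xX': "x \<notin> X'"
    proof
      assume "x \<in> X'"
      then have "x \<in> span (insert y H)" unfolding X'_def by simp
      moreover have "x \<notin> span H" using xH span_of_sub[OF sH] by simp
      ultimately have "y \<in> span (insert x H)" by (rule exchange)
      then have "y \<in> X" using XH by simp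
      then show False using y by blast
    qed
    define T where "T = span (X \<union> X')"
    have T1: "T = span (X \<union> {y})"
    proof
      show "T \<subseteq> span (X \<union> {y})" unfolding T_def
      proof (rule span_min[OF span_sub])
        have "X' \<subseteq> span (X \<union> {y})" unfolding X'_def by (rule span_mono) (use HX in blast)
        then show "X \<union> X' \<subseteq> span (X \<union> {y})" using span_sup by blast
      qed
      show "span (X \<union> {y}) \<subseteq> T" unfolding T_def by (rule span_mono) (use yX' in blast)
    qed
    have T2: "T = span (X' \<union> {x})"
    proof
      show "T \<subseteq> span (X' \<union> {x})" unfolding T_def
      proof (rule span_min[OF span_sub])
        have "X \<subseteq> span (X' \<union> {x})" unfolding XH by (rule span_mono) (use HX' in blast)
        then show "X \<union> X' \<subseteq> span (X' \<union> {x})" using span_sup by blast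
      qed
      show "span (X' \<union> {x}) \<subseteq> T" unfolding T_def by (rule span_mono) (use x in blast)
    qed
    have qXT: "qd X T {y}" unfolding qd_def T1 using indep_single[OF X y(2)] by simp
    have qX'T: "qd X' T {x}" unfolding qd_def T2 using indep_single[OF sX' xX'] by simp
    have edge: "grassmann_edge smul X X'"
      unfolding grassmann_edge_def adjacent_def ssum_span[OF X sX'] T_def[symmetric]
      using GX GX' imp_qdim[OF X qXT] imp_qdim[OF sX' qX'T] by simp
    have XP: "X \<subseteq> P" "Y \<subseteq> P" unfolding P_def using span_sup by blast+
    have X'P: "X' \<subseteq> P" unfolding X'_def by (rule span_min[OF sP]) (use HX XP y in blast)
    have dHX: "dimq H X = 1" using dimq_eq[OF sH qHX] by simp
    have dHX': "dimq H X' = 1" using dimq_eq[OF sH qHX'] by simp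
    have fHX: "fin H X" using qHX fin_def by blast
    have t1: "fin H P \<and> dimq H P = dimq H X + dimq X P" using fin_trans[OF sH X fHX fXP] .
    have t2: "fin H X' \<and> fin X' P \<and> dimq H P = dimq H X' + dimq X' P"
      using dimq_add[OF sH sX' HX' X'P] t1 by blast
    have dX'P: "dimq X' P = d" using t1 t2 dHX dHX' dX by simp
    define P' where "P' = span (X' \<union> Y)"
    have sP': "subspace smul P'" unfolding P'_def by simp
    have P'P: "P' \<subseteq> P" unfolding P'_def by (rule span_min[OF sP]) (use X'P XP in blast)
    have X'P': "X' \<subseteq> P'" "Y \<subseteq> P'" unfolding P'_def using span_sup by blast+
    have a2: "fin X' P' \<and> fin P' P \<and> dimq X' P = dimq X' P' + dimq P' P"
      using dimq_add[OF sX' sP' X'P'(1) P'P] t2 by blast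
    have a3: "fin Y P' \<and> fin P' P \<and> dimq Y P = dimq Y P' + dimq P' P"
      using dimq_add[OF Y sP' X'P'(2) P'P fYP] by blast
    have eq': "dimq X' P' = dimq Y P'" using a2 a3 dX'P dX eP by simp
    have xP': "x \<notin> P'"
    proof
      assume xin: "x \<in> P'"
      have "P' = span (span (H \<union> {y}) \<union> Y)" unfolding P'_def X'_def ..
      also have "\<dots> = span ((H \<union> {y}) \<union> Y)" by (rule span_span_Un)
      also have "(H \<union> {y}) \<union> Y = H \<union> Y" using y by blast
      also have "span (H \<union> Y) = ssum H Y" using ssum_span[OF sH Y] by simp
      finally have "x \<in> ssum H Y" using xin by simp
      then obtain h y0 where hy: "x = h + y0" "h \<in> H" "y0 \<in> Y" unfolding ssum_def by blast
      have "y0 = x - h" using hy by simp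
      then have "y0 \<in> X" using sub_diff[OF X x(1)] hy(2) HX by auto
      then have "y0 \<in> H" using hy(3) WH unfolding W_def by blast
      then have "x \<in> H" using hy sub_add[OF sH] by simp
      then show False using xH by blast
    qed
    have "dimq P' P \<noteq> 0"
    proof
      assume "dimq P' P = 0"
      then have "P = P'" using dimq_zero[OF sP'] a2 by blast
      then show False using xP' x XP by blast
    qed
    then have lt: "dimq X' P' < d" using a2 dX'P by simp
    have R': "Rq X' Y" unfolding Rq_def P'_def[symmetric] using a2 a3 eq' by blast
    have "(grassmann_edge smul)\<^sup>*\<^sup>* X' Y" using less.IH[OF lt GX' R'] unfolding P'_def by blast
    then show ?thesis using converse_rtranclp_into_rtranclp[of "grassmann_edge smul" X X' Y] edge by blast
  qed
qed

end

context lvs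
begin

lemma far_point:
  assumes ID: "infinite_dimensional smul" and GX: "X \<in> GG smul"
  shows "\<exists>Z. Z \<in> GG smul \<and> Rq X Z \<and> dimq X (span (X \<union> Z)) = Suc n"
proof -
  have X: "subspace smul X" using GG_sub[OF GX] .
  obtain A where A: "A \<subseteq> X" "indep {0} A" "span A = X" using basis_exists[OF X] by blast
  obtain B where B: "indep X B" "span (X \<union> B) = UNIV" "A \<approx> B" using GG_extract[OF GX A(2,3)] by blast
  have infA: "infinite A" using GG_basis_infinite[OF ID GX A(2,3)] .
  have infB: "infinite B" using infA eqpoll_finite_iff[OF B(3)] by blast
  obtain xs where xs: "finite xs" "card xs = Suc n" "xs \<subseteq> A" using infinite_arbitrarily_large[OF infA] by blast
  obtain ys where ys: "finite ys" "card ys = Suc n" "ys \<subseteq> B" using infinite_arbitrarily_large[OF infB] by blast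
  have "indep (span ({0} \<union> A)) B" unfolding span_zero_Un A(3) using B(1) .
  then have IAB: "indep {0} (A \<union> B)" by (rule indep_union[OF sub_zero A(2)])
  have AB: "A \<inter> B = {}" using indep_notin[OF B(1)] A(1) by blast
  define H where "H = span (A - xs)"
  define Z where "Z = span ((A - xs) \<union> ys)"
  have sH: "subspace smul H" and sZ: "subspace smul Z" unfolding H_def Z_def by simp_all
  have HX: "H \<subseteq> X" unfolding H_def A(3)[symmetric] by (rule span_mono) blast
  have HZ: "H \<subseteq> Z" unfolding H_def Z_def by (rule span_mono) blast
  have XH: "X = span (H \<union> xs)"
  proof -
    have "span (H \<union> xs) = span ((A - xs) \<union> xs)" unfolding H_def by (rule span_span_Un)
    also have "(A - xs) \<union> xs = A" using xs(3) by blast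
    finally show ?thesis using A(3) by simp
  qed
  have ZH: "Z = span (H \<union> ys)" unfolding H_def Z_def by (rule span_span_Un[symmetric])
  have fHX: "fin H X" unfolding XH using fin_span[OF sH xs(1)] .
  have fHZ: "fin H Z" unfolding ZH using fin_span[OF sH ys(1)] .
  have GZ: "Z \<in> GG smul" by (rule GG_perturb[OF ID GX sZ sH HX HZ fHX fHZ])
  define S where "S = span (A \<union> ys)"
  have SXZ: "span (X \<union> Z) = S"
  proof -
    have "span (X \<union> Z) = span (span A \<union> Z)" using A(3) by simp
    also have "\<dots> = span (A \<union> Z)" by (rule span_span_Un)
    also have "\<dots> = span (A \<union> ((A - xs) \<union> ys))" unfolding Z_def by (rule span_span_Un2)
    also have "A \<union> ((A - xs) \<union> ys) = A \<union> ys" by blast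
    finally show ?thesis unfolding S_def .
  qed
  have q1: "qd X S ys"
  proof -
    have "span (X \<union> ys) = span (span A \<union> ys)" using A(3) by simp
    also have "\<dots> = S" unfolding S_def by (rule span_span_Un)
    finally show ?thesis unfolding qd_def using ys(1) indep_mono[OF B(1) ys(3)] by simp
  qed
  have q2: "qd Z S xs"
  proof -
    have d: "((A - xs) \<union> ys) \<inter> xs = {}" using AB xs(3) ys(3) by blast
    have "indep {0} (((A - xs) \<union> ys) \<union> xs)" by (rule indep_mono[OF IAB]) (use xs(3) ys(3) in blast)
    then have "indep (span ({0} \<union> ((A - xs) \<union> ys))) xs" by (rule indep_split[OF sub_zero _ d])
    then have I: "indep Z xs" unfolding span_zero_Un Z_def .
    have "span (Z \<union> xs) = span (((A - xs) \<union> ys) \<union> xs)" unfolding Z_def by (rule span_span_Un)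
    also have "((A - xs) \<union> ys) \<union> xs = A \<union> ys" using xs(3) by blast
    finally show ?thesis unfolding qd_def S_def using xs(1) I by simp
  qed
  have d1: "dimq X S = Suc n" using dimq_eq[OF X q1] ys(2) by simp
  have d2: "dimq Z S = Suc n" using dimq_eq[OF sZ q2] xs(2) by simp
  have "Rq X Z" unfolding Rq_def SXZ using q1 q2 d1 d2 fin_def by auto
  then show ?thesis using GZ d1 SXZ by auto
qed

lemma component_char:
  assumes ID: "infinite_dimensional smul" and GX: "X \<in> GG smul"
  shows "Y \<in> component smul X \<longleftrightarrow> Y \<in> GG smul \<and> Rq X Y"
proof
  assume "Y \<in> component smul X"
  then show "Y \<in> GG smul \<and> Rq X Y" using component_sub[OF GX] unfolding component_def by blast
next
  assume "Y \<in> GG smul \<and> Rq X Y"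
  then show "Y \<in> component smul X"
    using path_exists[OF ID, of Y X "dimq X (span (X \<union> Y))"] GX unfolding component_def by blast
qed

end

theorem mainTheorem8:
  fixes smul :: "'k::division_ring \<Rightarrow> 'v::ab_group_add \<Rightarrow> 'v"
  assumes "left_vector_space smul"
    and "infinite_dimensional smul"
  shows "(\<exists>X\<in>GG smul. \<exists>Y\<in>GG smul. \<not> (grassmann_edge smul)\<^sup>*\<^sup>* X Y)
    \<and> (\<forall>X\<in>GG smul. component smul X =
          {Y \<in> GG smul. \<exists>d::nat. qdim smul (ssum X Y) X d \<and> qdim smul (ssum X Y) Y d})
    \<and> (\<forall>X\<in>GG smul. \<forall>Y. subspace smul Y \<and> X \<inter> Y = {0} \<and> ssum X Y = UNIV
          \<longrightarrow> Y \<notin> component smul X)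
    \<and> (\<forall>X\<in>GG smul. \<forall>Y\<in>GG smul. Y \<subset> X \<or> X \<subset> Y \<longrightarrow> Y \<notin> component smul X)
    \<and> (\<forall>X\<in>GG smul. \<forall>H. subspace smul H \<and> qdim smul X H 1 \<longrightarrow> H \<in> GG smul)
    \<and> (\<forall>X\<in>GG smul. \<forall>n::nat. \<exists>Y\<in>component smul X. \<exists>Z\<in>component smul X.
          \<not> dist_le smul Y Z n)"
proof -
  interpret lvs smul by (rule lvs.intro) (rule assms(1))
  have ID: "infinite_dimensional smul" by (rule assms(2))
  have C2: "component smul X = {Y \<in> GG smul. \<exists>d::nat. qdim smul (ssum X Y) X d \<and> qdim smul (ssum X Y) Y d}"
    if GX: "X \<in> GG smul" for X
  proof -
    have "Y \<in> component smul X \<longleftrightarrow> Y \<in> GG smul \<and> (\<exists>d::nat. qdim smul (ssum X Y) X d \<and> qdim smul (ssum X Y) Y d)" for Y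
    proof
      assume "Y \<in> component smul X"
      then have GY: "Y \<in> GG smul" and R: "Rq X Y" using component_char[OF ID GX, of Y] by auto
      have "(\<exists>d::nat. qdim smul (ssum X Y) X d \<and> qdim smul (ssum X Y) Y d)"
        using Rq_iff[OF GG_sub[OF GX] GG_sub[OF GY]] R by (simp only:)
      then show "Y \<in> GG smul \<and> (\<exists>d::nat. qdim smul (ssum X Y) X d \<and> qdim smul (ssum X Y) Y d)"
        using GY by (simp only: simp_thms)
    next
      assume a: "Y \<in> GG smul \<and> (\<exists>d::nat. qdim smul (ssum X Y) X d \<and> qdim smul (ssum X Y) Y d)"
      then have GY: "Y \<in> GG smul" by (simp only:)
      have "Rq X Y" using Rq_iff[OF GG_sub[OF GX] GG_sub[OF GY]] a by (simp only: simp_thms)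
      then show "Y \<in> component smul X" using component_char[OF ID GX, of Y] GY by (simp only: simp_thms)
    qed
    then show ?thesis by blast
  qed
  have C3: "Y \<notin> component smul X"
    if GX: "X \<in> GG smul" and Y: "subspace smul Y" "X \<inter> Y = {0}" "ssum X Y = UNIV" for X Y
  proof
    assume "Y \<in> component smul X"
    then have "Rq X Y" using component_char[OF ID GX, of Y] by (simp only: simp_thms)
    then have "fin X (span (X \<union> Y))" unfolding Rq_def by blast
    moreover have "span (X \<union> Y) = UNIV" using ssum_span[OF GG_sub[OF GX] Y(1)] Y(3) by simp
    ultimately show False using GG_not_fin[OF ID GX] by simp
  qed
  have C4: "Y \<notin> component smul X"
    if GX: "X \<in> GG smul" and GY: "Y \<in> GG smul" and s: "Y \<subset> X \<or> X \<subset> Y" for X Y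
  proof
    assume "Y \<in> component smul X"
    then have R: "Rq X Y" using component_char[OF ID GX, of Y] by (simp only: simp_thms)
    have X: "subspace smul X" and Y: "subspace smul Y" using GX GY GG_sub by auto
    from s show False
    proof
      assume YX: "Y \<subset> X"
      then have "span (X \<union> Y) = X" using span_of_sub[OF X] by (simp add: Un_absorb2)
      then have "fin Y X" "dimq Y X = 0" using R dimq_refl[OF X] unfolding Rq_def by auto
      then have "X = Y" using dimq_zero[OF Y] by blast
      then show False using YX by blast
    next
      assume XY: "X \<subset> Y"
      then have "span (X \<union> Y) = Y" using span_of_sub[OF Y] by (simp add: Un_absorb1)
      then have "fin X Y" "dimq X Y = 0" using R dimq_refl[OF Y] unfolding Rq_def by auto
      then have "Y = X" using dimq_zero[OF X] by blast
      then show False using XY by blast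
    qed
  qed
  have C5: "H \<in> GG smul" if GX: "X \<in> GG smul" and H: "subspace smul H" "qdim smul X H 1" for X H
  proof -
    have fHX: "fin H X" using H(2) qdim_iff[OF H(1), of X 1] by (simp only: simp_thms)
    have HX: "H \<subseteq> X" using fin_sup[OF fHX] .
    show ?thesis by (rule GG_perturb[OF ID GX H(1) H(1) HX subset_refl fHX fin_refl[OF H(1)]])
  qed
  have C1: "\<exists>X\<in>GG smul. \<exists>Y\<in>GG smul. \<not> (grassmann_edge smul)\<^sup>*\<^sup>* X Y"
  proof -
    obtain X Y where XY: "X \<in> GG smul" "Y \<in> GG smul" "subspace smul Y" "X \<inter> Y = {0}" "ssum X Y = UNIV"
      using GG_exists[OF ID] by blast
    have "Y \<notin> component smul X" using C3[OF XY(1,3,4,5)] .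
    then have "\<not> (grassmann_edge smul)\<^sup>*\<^sup>* X Y" unfolding component_def by blast
    then show ?thesis using XY(1,2) by blast
  qed
  have C6: "\<exists>Y\<in>component smul X. \<exists>Z\<in>component smul X. \<not> dist_le smul Y Z n"
    if GX: "X \<in> GG smul" for X n
  proof -
    obtain Z where Z: "Z \<in> GG smul" "Rq X Z" "dimq X (span (X \<union> Z)) = Suc n"
      using far_point[OF ID GX] by blast
    have ZC: "Z \<in> component smul X" using component_char[OF ID GX, of Z] Z(1,2) by (simp only: simp_thms)
    have XC: "X \<in> component smul X" unfolding component_def by simp
    have "\<not> dist_le smul X Z n"
    proof
      assume "dist_le smul X Z n"
      then obtain k where k: "k \<le> n" "(grassmann_edge smul ^^ k) X Z" unfolding dist_le_def by blast
      have "dimq X (span (X \<union> Z)) \<le> k" using lower_bound[OF GG_sub[OF GX] k(2)] by blast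
      then show False using Z(3) k(1) by simp
    qed
    then show ?thesis using XC ZC by blast
  qed
  show ?thesis
    apply (intro conjI)
    subgoal by (rule C1)
    subgoal using C2 by blast
    subgoal using C3 by blast
    subgoal using C4 by blast
    subgoal using C5 by blast
    subgoal using C6 by blast
    done
qed


end
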